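(* Let $P(s)=\sum_{j=0}^{\mathsf d} s^j P_j$ with $P_j\in\mathbb C^{\mathsf n\times\mathsf n}$, $A\in\mathbb C^{\mathsf k\times\mathsf k}$, $B\in\mathbb C^{\mathsf k\times\mathsf n}$, $C\in\mathbb C^{\mathsf n\times\mathsf k}$, $R(s)=P(s)+C(sI_{\mathsf k}-A)^{-1}B$, and consider the iterates $\lambda_\ell$ and basis matrices $W_\ell,V_\ell$ of the subspace method described in the context with interpolation parameter $\mathsf q\ge2$. Let $\lambda_*$ be a simple eigenvalue of $R$ (i.e. $\eta_{\mathsf n}(\lambda_* )=0$ and $\eta_1(\lambda_* ),\dots,\eta_{\mathsf n-1}(\lambda_* )>0$) such that, for a given $\xi>0$, $\sigma_{\min}(A-\lambda_*I_{\mathsf k})\ge\xi$ and $\sigma_{\min}(W_\ell^*AV_\ell-\lambda_*W_\ell^*V_\ell)\ge\xi$, and suppose the Hessian $\nabla^2\eta_{\mathsf n}(\lambda_* )$ is invertible. Then, for consecutive iterates $\lambda_\ell,\lambda_{\ell+1}$ sufficiently close to $\lambda_*$, there exists a constant $C>0$ (independent of $\lambda_1,\dots,\lambda_\ell$ and of the subspaces spanned by $W_\ell,V_\ell$) such that $|\lambda_{\ell+1}-\lambda_*|\le C|\lambda_\ell-\lambda_*|^2$.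
   Context: Subspace method (for given $A,B,C,P$, integer $\mathsf q\ge 2$, target $\tau\in\mathbb C$): set $\lambda_0=\tau$. For $\ell=0,1,2,\dots$: form $\widetilde V_\ell=[(A-\lambda_\ell I)^{-1}B,\dots,(A-\lambda_\ell I)^{-\mathsf q}B]$ and $\widetilde W_\ell=[(A-\lambda_\ell I)^{-*}C^*,\dots,(A-\lambda_\ell I)^{-\mathsf q *}C^*]$ (here $X^{-j*}=((X^* )^{-1})^j$); let $V_0,W_0$ have orthonormal columns spanning the column spaces of $\widetilde V_0,\widetilde W_0$, and for $\ell\ge1$ let $V_\ell,W_\ell$ have orthonormal columns spanning the column spaces of $[V_{\ell-1}\ \widetilde V_\ell]$, $[W_{\ell-1}\ \widetilde W_\ell]$. Then $\lambda_{\ell+1}$ is the eigenvalue (point of singularity) of $R_\ell(s)=P(s)+CV_\ell(sW_\ell^*V_\ell-W_\ell^*AV_\ell)^{-1}W_\ell^*B$ closest to $\tau$. $\eta_1(s)\ge\dots\ge\eta_{\mathsf n}(s)$ denote the eigenvalues of $R(s)^*R(s)$ (squared singular values of $R(s)$). $\nabla^2\eta(s)$ denotes the $2\times2$ Hessian with respect to $(\mathrm{Re}(s),\mathrm{Im}(s))$; $\sigma_{\min}$ is the smallest singular value. *)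

theory Defs
  imports "HOL-Analysis.Analysis" "Jordan_Normal_Form.Schur_Decomposition"
begin

text \<open>Inverse of a square matrix (meaningful when the matrix is invertible).\<close>
definition minv :: "complex mat \<Rightarrow> complex mat" where
  "minv M = (SOME N. N \<in> carrier_mat (dim_row M) (dim_row M) \<and> inverts_mat M N \<and> inverts_mat N M)"

definition hcat :: "complex mat \<Rightarrow> complex mat \<Rightarrow> complex mat" where
  "hcat X Y = mat (dim_row X) (dim_col X + dim_col Y)
     (\<lambda>(i,j). if j < dim_col X then X $$ (i,j) else Y $$ (i, j - dim_col X))"

definition hcat_list :: "nat \<Rightarrow> complex mat list \<Rightarrow> complex mat" where
  "hcat_list m Xs = foldl hcat (0\<^sub>m m 0) Xs"

definition colspace :: "complex mat \<Rightarrow> complex vec set" where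
  "colspace M = {M *\<^sub>v x | x. x \<in> carrier_vec (dim_col M)}"

definition orthonormal_cols :: "complex mat \<Rightarrow> bool" where
  "orthonormal_cols M \<longleftrightarrow> mat_adjoint M * M = 1\<^sub>m (dim_col M)"

definition herm_eigs :: "complex mat \<Rightarrow> real list" where
  "herm_eigs H = rev (sort (map Re (SOME as. char_poly H = (\<Prod>a\<leftarrow>as. [:- a, 1:])
                                              \<and> length as = dim_row H)))"

text \<open>eta j M = j-th largest eigenvalue of M^* M (1-based), i.e. the squared j-th
  singular value of M.\<close>
definition eta :: "nat \<Rightarrow> complex mat \<Rightarrow> real" where
  "eta j M = herm_eigs (mat_adjoint M * M) ! (j - 1)"

definition sigma_min :: "complex mat \<Rightarrow> real" where
  "sigma_min M = sqrt (last (herm_eigs (mat_adjoint M * M)))"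

definition polyP :: "nat \<Rightarrow> (nat \<Rightarrow> complex mat) \<Rightarrow> nat \<Rightarrow> complex \<Rightarrow> complex mat" where
  "polyP n Pc d s = foldr (\<lambda>j M. (s ^ j) \<cdot>\<^sub>m Pc j + M) [0..<Suc d] (0\<^sub>m n n)"

definition Rfun :: "nat \<Rightarrow> (nat \<Rightarrow> complex mat) \<Rightarrow> nat \<Rightarrow> complex mat \<Rightarrow> complex mat
                     \<Rightarrow> complex mat \<Rightarrow> complex \<Rightarrow> complex mat" where
  "Rfun n Pc d A B C s = polyP n Pc d s + C * minv (s \<cdot>\<^sub>m 1\<^sub>m (dim_row A) - A) * B"

definition Rred :: "nat \<Rightarrow> (nat \<Rightarrow> complex mat) \<Rightarrow> nat \<Rightarrow> complex mat \<Rightarrow> complex mat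
                     \<Rightarrow> complex mat \<Rightarrow> complex mat \<Rightarrow> complex mat \<Rightarrow> complex \<Rightarrow> complex mat" where
  "Rred n Pc d A B C V W s = polyP n Pc d s +
      C * V * minv (s \<cdot>\<^sub>m (mat_adjoint W * V) - mat_adjoint W * A * V) * mat_adjoint W * B"

definition red_eigenvalue :: "nat \<Rightarrow> (nat \<Rightarrow> complex mat) \<Rightarrow> nat \<Rightarrow> complex mat \<Rightarrow> complex mat
                     \<Rightarrow> complex mat \<Rightarrow> complex mat \<Rightarrow> complex mat \<Rightarrow> complex \<Rightarrow> bool" where
  "red_eigenvalue n Pc d A B C V W s \<longleftrightarrow>
      invertible_mat (s \<cdot>\<^sub>m (mat_adjoint W * V) - mat_adjoint W * A * V) \<and>
      det (Rred n Pc d A B C V W s) = 0"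

definition Vtil :: "complex mat \<Rightarrow> complex mat \<Rightarrow> nat \<Rightarrow> complex \<Rightarrow> complex mat" where
  "Vtil A B q lam = hcat_list (dim_row A)
     (map (\<lambda>j. (minv (A - lam \<cdot>\<^sub>m 1\<^sub>m (dim_row A)) ^\<^sub>m j) * B) [1..<Suc q])"

definition Wtil :: "complex mat \<Rightarrow> complex mat \<Rightarrow> nat \<Rightarrow> complex \<Rightarrow> complex mat" where
  "Wtil A C q lam = hcat_list (dim_row A)
     (map (\<lambda>j. (minv (mat_adjoint (A - lam \<cdot>\<^sub>m 1\<^sub>m (dim_row A))) ^\<^sub>m j) * mat_adjoint C)
          [1..<Suc q])"

definition subspace_step :: "nat \<Rightarrow> (nat \<Rightarrow> complex mat) \<Rightarrow> nat \<Rightarrow> complex mat \<Rightarrow> complex mat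
     \<Rightarrow> complex mat \<Rightarrow> nat \<Rightarrow> complex \<Rightarrow> (nat \<Rightarrow> complex) \<Rightarrow> (nat \<Rightarrow> complex mat)
     \<Rightarrow> (nat \<Rightarrow> complex mat) \<Rightarrow> nat \<Rightarrow> bool" where
  "subspace_step n Pc d A B C q \<tau> lam V W m \<longleftrightarrow>
     invertible_mat (A - lam m \<cdot>\<^sub>m 1\<^sub>m (dim_row A)) \<and>
     dim_row (V m) = dim_row A \<and> dim_row (W m) = dim_row A \<and>
     orthonormal_cols (V m) \<and> orthonormal_cols (W m) \<and>
     colspace (V m) = colspace (if m = 0 then Vtil A B q (lam m)
                                else hcat (V (m - 1)) (Vtil A B q (lam m))) \<and>
     colspace (W m) = colspace (if m = 0 then Wtil A C q (lam m)
                                else hcat (W (m - 1)) (Wtil A C q (lam m))) \<and>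
     red_eigenvalue n Pc d A B C (V m) (W m) (lam (Suc m)) \<and>
     (\<forall>\<mu>. red_eigenvalue n Pc d A B C (V m) (W m) \<mu> \<longrightarrow>
           cmod (lam (Suc m) - \<tau>) \<le> cmod (\<mu> - \<tau>))"

definition subspace_iterates :: "nat \<Rightarrow> (nat \<Rightarrow> complex mat) \<Rightarrow> nat \<Rightarrow> complex mat \<Rightarrow> complex mat
     \<Rightarrow> complex mat \<Rightarrow> nat \<Rightarrow> complex \<Rightarrow> (nat \<Rightarrow> complex) \<Rightarrow> (nat \<Rightarrow> complex mat)
     \<Rightarrow> (nat \<Rightarrow> complex mat) \<Rightarrow> nat \<Rightarrow> bool" where
  "subspace_iterates n Pc d A B C q \<tau> lam V W l \<longleftrightarrow>
     lam 0 = \<tau> \<and> (\<forall>m\<le>l. subspace_step n Pc d A B C q \<tau> lam V W m)"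

text \<open>H (a real-linear map on C = R^2) is the Hessian of f :: C \<Rightarrow> R at z: f is
  differentiable near z with gradient g, and H is the derivative (Jacobian) of g at z.\<close>
definition hessian_at :: "(complex \<Rightarrow> real) \<Rightarrow> complex \<Rightarrow> (complex \<Rightarrow> complex) \<Rightarrow> bool" where
  "hessian_at f z H \<longleftrightarrow>
     (\<exists>g. (\<forall>\<^sub>F w in nhds z. (f has_derivative (\<lambda>h. g w \<bullet> h)) (at w)) \<and>
          (g has_derivative H) (at z))"

end

theory Submission
  imports Defs
begin
definition ip :: "complex vec \<Rightarrow> complex vec \<Rightarrow> complex" where
  "ip x y = (\<Sum>i<dim_vec x. x$i * cnj (y$i))"
definition nrm :: "complex vec \<Rightarrow> real" where
  "nrm x = sqrt (\<Sum>i<dim_vec x. (cmod (x$i))^2)"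
definition fro :: "complex mat \<Rightarrow> real" where
  "fro A = sqrt (\<Sum>i<dim_row A. \<Sum>j<dim_col A. (cmod (A$$(i,j)))^2)"

lemma nrm_L2: "nrm x = L2_set (\<lambda>i. cmod (x$i)) {..<dim_vec x}"
  by (simp add: nrm_def L2_set_def)

lemma nrm_ge0[simp]: "0 \<le> nrm x" by (simp add: nrm_def sum_nonneg)
lemma fro_ge0[simp]: "0 \<le> fro x" by (simp add: fro_def sum_nonneg)

lemma nrm_sq: "(nrm x)^2 = (\<Sum>i<dim_vec x. (cmod (x$i))^2)"
  by (simp add: nrm_def sum_nonneg)

lemma ip_self: "ip x x = complex_of_real ((nrm x)^2)"
  unfolding nrm_sq ip_def of_real_sum
  by (intro sum.cong refl) (metis complex_norm_square of_real_power)

lemma ip_cnj: "dim_vec x = dim_vec y \<Longrightarrow> ip y x = cnj (ip x y)"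
  unfolding ip_def by (simp add: mult.commute)

lemma ip_cs: assumes "dim_vec x = dim_vec y" shows "cmod (ip x y) \<le> nrm x * nrm y"
proof -
  have "cmod (ip x y) \<le> (\<Sum>i<dim_vec x. cmod (x$i * cnj (y$i)))"
    unfolding ip_def by (rule norm_sum)
  also have "\<dots> = (\<Sum>i<dim_vec x. \<bar>cmod (x$i)\<bar> * \<bar>cmod (y$i)\<bar>)"
    by (simp add: norm_mult)
  also have "\<dots> \<le> L2_set (\<lambda>i. cmod (x$i)) {..<dim_vec x} * L2_set (\<lambda>i. cmod (y$i)) {..<dim_vec x}"
    by (rule L2_set_mult_ineq)
  finally show ?thesis using assms by (simp add: nrm_L2)
qed

lemma nrm_add: assumes "x \<in> carrier_vec n" "y \<in> carrier_vec n"
  shows "nrm (x + y) \<le> nrm x + nrm y"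
proof -
  have "nrm (x + y) = L2_set (\<lambda>i. cmod ((x+y)$i)) {..<n}" using assms by (simp add: nrm_L2)
  also have "\<dots> \<le> L2_set (\<lambda>i. cmod (x$i) + cmod (y$i)) {..<n}"
    using assms by (intro L2_set_mono) (auto simp: norm_triangle_ineq)
  also have "\<dots> \<le> L2_set (\<lambda>i. cmod (x$i)) {..<n} + L2_set (\<lambda>i. cmod (y$i)) {..<n}"
    by (rule L2_set_triangle_ineq)
  finally show ?thesis using assms by (simp add: nrm_L2)
qed

lemma nrm_smult: "nrm (c \<cdot>\<^sub>v x) = cmod c * nrm x"
proof -
  have "(\<Sum>i<dim_vec x. (cmod ((c \<cdot>\<^sub>v x)$i))^2) = (cmod c)^2 * (\<Sum>i<dim_vec x. (cmod (x$i))^2)"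
    by (simp add: sum_distrib_left norm_mult power_mult_distrib)
  then show ?thesis unfolding nrm_def by (simp add: real_sqrt_mult)
qed

lemma nrm_uminus: "nrm (- x) = nrm x"
  unfolding nrm_def by simp

lemma nrm_diff: assumes "x \<in> carrier_vec n" "y \<in> carrier_vec n"
  shows "nrm (x - y) \<le> nrm x + nrm y"
proof -
  have "x - y = x + (- y)" using assms by auto
  then show ?thesis using nrm_add[of x n "-y"] assms by (simp add: nrm_uminus)
qed

lemma nrm_zero_iff: assumes "x \<in> carrier_vec n" shows "nrm x = 0 \<longleftrightarrow> x = 0\<^sub>v n"
proof
  assume "nrm x = 0"
  then have "(\<Sum>i<dim_vec x. (cmod (x$i))^2) = 0" unfolding nrm_def by simp
  then have "\<forall>i\<in>{..<dim_vec x}. (cmod (x$i))^2 = 0"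
    by (subst sum_nonneg_eq_0_iff[symmetric]) auto
  then show "x = 0\<^sub>v n" using assms by (intro eq_vecI) auto
next
  assume "x = 0\<^sub>v n" then show "nrm x = 0" by (simp add: nrm_def)
qed

lemma nrm_zero[simp]: "nrm (0\<^sub>v n) = 0" by (simp add: nrm_def)

lemma nrm_mult: assumes A: "A \<in> carrier_mat m n" and x: "x \<in> carrier_vec n"
  shows "nrm (A *\<^sub>v x) \<le> fro A * nrm x"
proof -
  have row: "(cmod ((A *\<^sub>v x)$i))^2 \<le> (\<Sum>j<n. (cmod (A$$(i,j)))^2) * (nrm x)^2" if i: "i < m" for i
  proof -
    have "(A *\<^sub>v x)$i = (\<Sum>j<n. A$$(i,j) * x$j)"
      using A x i by (simp add: mult_mat_vec_def scalar_prod_def atLeast0LessThan)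
    then have "cmod ((A *\<^sub>v x)$i) \<le> (\<Sum>j<n. \<bar>cmod (A$$(i,j))\<bar> * \<bar>cmod (x$j)\<bar>)"
      by (auto intro!: order.trans[OF norm_sum] simp: norm_mult)
    also have "\<dots> \<le> L2_set (\<lambda>j. cmod (A$$(i,j))) {..<n} * L2_set (\<lambda>j. cmod (x$j)) {..<n}"
      by (rule L2_set_mult_ineq)
    finally have "cmod ((A *\<^sub>v x)$i) \<le> L2_set (\<lambda>j. cmod (A$$(i,j))) {..<n} * nrm x"
      using x by (simp add: nrm_L2)
    then have "(cmod ((A *\<^sub>v x)$i))^2 \<le> (L2_set (\<lambda>j. cmod (A$$(i,j))) {..<n} * nrm x)^2"
      by (intro power_mono) auto
    also have "\<dots> = (\<Sum>j<n. (cmod (A$$(i,j)))^2) * (nrm x)^2"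
      by (simp add: power_mult_distrib L2_set_def sum_nonneg)
    finally show ?thesis .
  qed
  have "(nrm (A *\<^sub>v x))^2 = (\<Sum>i<m. (cmod ((A *\<^sub>v x)$i))^2)" using A by (simp add: nrm_sq)
  also have "\<dots> \<le> (\<Sum>i<m. (\<Sum>j<n. (cmod (A$$(i,j)))^2) * (nrm x)^2)"
    by (intro sum_mono row) auto
  also have "\<dots> = (fro A * nrm x)^2"
    using A by (simp add: fro_def power_mult_distrib sum_distrib_right sum_nonneg)
  finally show ?thesis
    by (rule power2_le_imp_le) (simp)
qed

lemma adj_carrier[simp]: "A \<in> carrier_mat m n \<Longrightarrow> mat_adjoint A \<in> carrier_mat n m"
  unfolding mat_adjoint_def by auto

lemma adj_dims[simp]: "dim_row (mat_adjoint A) = dim_col A" "dim_col (mat_adjoint A) = dim_row A"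
  unfolding mat_adjoint_def by auto

lemma adj_index[simp]: "i < dim_col A \<Longrightarrow> j < dim_row A \<Longrightarrow> mat_adjoint A $$ (i,j) = cnj (A $$ (j,i))"
  unfolding mat_adjoint_def by (auto simp: mat_of_rows_def)

lemma ip_adj: assumes A: "A \<in> carrier_mat m n" and x: "x \<in> carrier_vec n" and y: "y \<in> carrier_vec m"
  shows "ip (A *\<^sub>v x) y = ip x (mat_adjoint A *\<^sub>v y)"
proof -
  have "ip (A *\<^sub>v x) y = (\<Sum>i<m. (\<Sum>j<n. A$$(i,j) * x$j) * cnj (y$i))"
    using A x y unfolding ip_def by (simp add: mult_mat_vec_def scalar_prod_def atLeast0LessThan)
  also have "\<dots> = (\<Sum>i<m. \<Sum>j<n. x$j * (A$$(i,j) * cnj (y$i)))"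
    by (auto simp: sum_distrib_left sum_distrib_right mult_ac intro!: sum.cong)
  also have "\<dots> = (\<Sum>j<n. \<Sum>i<m. x$j * (A$$(i,j) * cnj (y$i)))"
    by (rule sum.swap)
  also have "\<dots> = ip x (mat_adjoint A *\<^sub>v y)"
    using A x y unfolding ip_def
    by (simp add: mult_mat_vec_def scalar_prod_def atLeast0LessThan sum_distrib_left)
  finally show ?thesis .
qed

lemma ip_add_left: "x \<in> carrier_vec n \<Longrightarrow> y \<in> carrier_vec n \<Longrightarrow> ip (x + y) z = ip x z + ip y z"
  unfolding ip_def by (simp add: sum.distrib distrib_right)
lemma ip_diff_left: "x \<in> carrier_vec n \<Longrightarrow> y \<in> carrier_vec n \<Longrightarrow> ip (x - y) z = ip x z - ip y z"
  unfolding ip_def by (simp add: sum_subtractf left_diff_distrib)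
lemma ip_smult_left: "ip (c \<cdot>\<^sub>v x) z = c * ip x z"
  unfolding ip_def by (simp add: sum_distrib_left mult.assoc)
lemma ip_add_right: "x \<in> carrier_vec n \<Longrightarrow> y \<in> carrier_vec n \<Longrightarrow> z \<in> carrier_vec n \<Longrightarrow> ip z (x + y) = ip z x + ip z y"
  unfolding ip_def by (simp add: sum.distrib distrib_left)
lemma ip_diff_right: "x \<in> carrier_vec n \<Longrightarrow> y \<in> carrier_vec n \<Longrightarrow> z \<in> carrier_vec n \<Longrightarrow> ip z (x - y) = ip z x - ip z y"
  unfolding ip_def by (simp add: sum_subtractf right_diff_distrib)
lemma ip_smult_right: "z \<in> carrier_vec n \<Longrightarrow> x \<in> carrier_vec n \<Longrightarrow> ip z (c \<cdot>\<^sub>v x) = cnj c * ip z x"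
  unfolding ip_def by (simp add: sum_distrib_left mult.assoc mult.left_commute)

lemma minv_props: fixes M :: "complex mat"
  assumes M: "M \<in> carrier_mat n n" and inj: "\<And>x. x \<in> carrier_vec n \<Longrightarrow> M *\<^sub>v x = 0\<^sub>v n \<Longrightarrow> x = 0\<^sub>v n"
  shows "minv M \<in> carrier_mat n n \<and> M * minv M = 1\<^sub>m n \<and> minv M * M = 1\<^sub>m n"
proof -
  have "det M \<noteq> 0" using det_0_iff_vec_prod_zero[OF M] inj by auto
  from det_non_zero_imp_unit[OF M this, of "()"]
  obtain Q where Q: "Q \<in> carrier_mat n n" "Q * M = 1\<^sub>m n" "M * Q = 1\<^sub>m n"
    unfolding Units_def ring_mat_def by auto
  have ex: "\<exists>N. N \<in> carrier_mat (dim_row M) (dim_row M) \<and> inverts_mat M N \<and> inverts_mat N M"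
    using Q M by (intro exI[of _ Q]) (auto simp: inverts_mat_def)
  have "minv M \<in> carrier_mat (dim_row M) (dim_row M) \<and> inverts_mat M (minv M) \<and> inverts_mat (minv M) M"
    unfolding minv_def by (rule someI_ex[OF ex])
  then show ?thesis using M by (auto simp: inverts_mat_def)
qed

lemma herm_eigs_ex: assumes H: "H \<in> carrier_mat n n"
  shows "\<exists>as. char_poly H = (\<Prod>a\<leftarrow>as. [:- a, 1:]) \<and> length as = n \<and> herm_eigs H = rev (sort (map Re as))"
proof -
  let ?P = "\<lambda>as. char_poly H = (\<Prod>a\<leftarrow>as. [:- a, 1:]) \<and> length as = dim_row H"
  have ex: "\<exists>as. ?P as" using char_poly_factorized[OF H] H by auto
  have "?P (SOME as. ?P as)" by (rule someI_ex[OF ex])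
  then show ?thesis using H unfolding herm_eigs_def by (intro exI[of _ "SOME as. ?P as"]) auto
qed

lemma last_rev_sort: fixes xs :: "real list" assumes "xs \<noteq> []"
  shows "last (rev (sort xs)) = Min (set xs)"
proof -
  have ne: "sort xs \<noteq> []" using assms by (metis length_0_conv length_sort)
  have "last (rev (sort xs)) = hd (sort xs)" using ne by (simp add: last_rev)
  also have "\<dots> = Min (set xs)"
  proof (rule Min_eqI[symmetric])
    show "finite (set xs)" by simp
    show "hd (sort xs) \<in> set xs" using ne by (metis hd_in_set set_sort)
    fix y assume "y \<in> set xs"
    then have "y \<in> set (sort xs)" by simp
    then obtain ys where "sort xs = hd (sort xs) # ys" "y \<in> set (hd (sort xs) # ys)"
      using ne by (metis list.collapse)
    moreover have "sorted (sort xs)" by simp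
    ultimately show "hd (sort xs) \<le> y" by (metis sorted_simps(2) set_ConsD order_refl)
  qed
  finally show ?thesis .
qed

lemma nrm_unit0: "0 < n \<Longrightarrow> nrm (unit_vec n 0) = 1"
proof -
  assume n: "0 < n"
  have "(\<Sum>i<n. (cmod (unit_vec n 0 $ i))^2) = (\<Sum>i<n. if i = 0 then 1 else 0)"
    by (intro sum.cong) (auto simp: unit_vec_def)
  also have "\<dots> = 1" using n by simp
  finally show ?thesis unfolding nrm_def by simp
qed

lemma smult_mat_vec: fixes A :: "complex mat" shows "A \<in> carrier_mat m n \<Longrightarrow> v \<in> carrier_vec n \<Longrightarrow> (c \<cdot>\<^sub>m A) *\<^sub>v v = c \<cdot>\<^sub>v (A *\<^sub>v v)"
  by (intro eq_vecI) (auto simp: mult_mat_vec_def scalar_prod_def sum_distrib_left mult.assoc)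

lemma smult_one_mult_vec: fixes v :: "complex vec" assumes v: "v \<in> carrier_vec n" shows "(c \<cdot>\<^sub>m 1\<^sub>m n) *\<^sub>v v = c \<cdot>\<^sub>v v"
proof -
  have "(c \<cdot>\<^sub>m 1\<^sub>m n) *\<^sub>v v = c \<cdot>\<^sub>v (1\<^sub>m n *\<^sub>v v)" by (rule smult_mat_vec[OF one_carrier_mat v])
  then show ?thesis using one_mult_mat_vec[OF v] by simp
qed

lemma adjN_carrier[simp]: "N \<in> carrier_mat m n \<Longrightarrow> mat_adjoint N * N \<in> carrier_mat n n"
  by (metis adj_carrier mult_carrier_mat)

lemma adjN_mult: fixes N :: "complex mat"
  shows "N \<in> carrier_mat m n \<Longrightarrow> v \<in> carrier_vec n \<Longrightarrow> (mat_adjoint N * N) *\<^sub>v v = mat_adjoint N *\<^sub>v (N *\<^sub>v v)"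
  by (rule assoc_mult_mat_vec[OF adj_carrier]) auto

lemma vec_diff_zero: fixes a b :: "complex vec"
  assumes "a \<in> carrier_vec n" "b \<in> carrier_vec n" "a - b = 0\<^sub>v n" shows "a = b"
proof (intro eq_vecI)
  fix i assume "i < dim_vec b"
  then have i: "i < dim_vec b" by simp
  have "(a - b) $ i = 0\<^sub>v n $ i" using assms(3) by simp
  also have "\<dots> = 0" using i assms(2) by simp
  finally have "a $ i - b $ i = 0" using index_minus_vec(1)[OF i, of a] by simp
  then show "a $ i = b $ i" by simp
qed (use assms in auto)

lemma ev_real: fixes N :: "complex mat"
  assumes N: "N \<in> carrier_mat n n" and v: "v \<in> carrier_vec n" "v \<noteq> 0\<^sub>v n"
    and ev: "(mat_adjoint N * N) *\<^sub>v v = a \<cdot>\<^sub>v v"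
  shows "a = complex_of_real (Re a) \<and> 0 \<le> Re a"
proof -
  have Nv: "N *\<^sub>v v \<in> carrier_vec n" using N v by simp
  have "(mat_adjoint N * N) *\<^sub>v v = mat_adjoint N *\<^sub>v (N *\<^sub>v v)"
    by (rule adjN_mult[OF N v(1)])
  then have e1: "mat_adjoint N *\<^sub>v (N *\<^sub>v v) = a \<cdot>\<^sub>v v" using ev by simp
  have "complex_of_real ((nrm (N *\<^sub>v v))^2) = ip (N *\<^sub>v v) (N *\<^sub>v v)" by (simp add: ip_self)
  also have "\<dots> = ip v (mat_adjoint N *\<^sub>v (N *\<^sub>v v))" by (rule ip_adj[OF N v(1) Nv])
  also have "\<dots> = cnj a * ip v v" unfolding e1 by (rule ip_smult_right[OF v(1) v(1)])
  also have "\<dots> = cnj a * complex_of_real ((nrm v)^2)" by (simp add: ip_self)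
  finally have e2: "complex_of_real ((nrm (N *\<^sub>v v))^2) = cnj a * complex_of_real ((nrm v)^2)" .
  have pos: "0 < nrm v" using nrm_zero_iff[OF v(1)] v(2) nrm_ge0[of v] by linarith
  define r where "r = (nrm (N *\<^sub>v v))^2 / (nrm v)^2"
  have r0: "0 \<le> r" unfolding r_def by simp
  have "cnj a = complex_of_real r" using e2 pos unfolding r_def
    by (simp add: field_simps)
  then have "a = complex_of_real r" by (metis complex_cnj_cnj complex_cnj_complex_of_real)
  then show ?thesis using r0 by simp
qed

lemma min_eig_exists: fixes N :: "complex mat"
  assumes N: "N \<in> carrier_mat n n" and n: "0 < n"
  shows "\<exists>m. (\<forall>x\<in>carrier_vec n. m * (nrm x)^2 \<le> (nrm (N *\<^sub>v x))^2) \<and>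
             (\<exists>v. v \<in> carrier_vec n \<and> v \<noteq> 0\<^sub>v n \<and> (mat_adjoint N * N) *\<^sub>v v = complex_of_real m \<cdot>\<^sub>v v)"
proof -
  define S where "S = {(nrm (N *\<^sub>v x))^2 | x. x \<in> carrier_vec n \<and> nrm x = 1}"
  define m where "m = Inf S"
  have S_ne: "S \<noteq> {}" unfolding S_def using nrm_unit0[OF n] by (auto intro!: exI[of _ "unit_vec n 0"])
  have bdd: "bdd_below S" unfolding S_def by (intro bdd_belowI[of _ 0]) auto
  have m_low1: "m \<le> (nrm (N *\<^sub>v x))^2" if "x \<in> carrier_vec n" "nrm x = 1" for x
    unfolding m_def using that bdd by (intro cInf_lower) (auto simp: S_def)
  have m_low: "m * (nrm x)^2 \<le> (nrm (N *\<^sub>v x))^2" if x: "x \<in> carrier_vec n" for x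
  proof (cases "x = 0\<^sub>v n")
    case True
    then show ?thesis using N by simp
  next
    case False
    then have pos: "0 < nrm x" using nrm_zero_iff[OF x] nrm_ge0[of x] by linarith
    define x' where "x' = complex_of_real (1 / nrm x) \<cdot>\<^sub>v x"
    have x': "x' \<in> carrier_vec n" using x unfolding x'_def by simp
    have "nrm x' = 1" using pos unfolding x'_def nrm_smult by (simp add: norm_divide)
    then have "m \<le> (nrm (N *\<^sub>v x'))^2" using m_low1 x' by simp
    also have "N *\<^sub>v x' = complex_of_real (1 / nrm x) \<cdot>\<^sub>v (N *\<^sub>v x)"
      unfolding x'_def using mult_mat_vec[OF N x] by simp
    finally have "m \<le> ((1 / nrm x) * nrm (N *\<^sub>v x))^2" using pos by (simp add: nrm_smult norm_divide)
    then have "m \<le> (nrm (N *\<^sub>v x))^2 / (nrm x)^2" by (simp add: power_divide)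
    then show ?thesis using pos by (simp add: field_simps)
  qed
  have approx: "\<exists>x. x \<in> carrier_vec n \<and> nrm x = 1 \<and> (nrm (N *\<^sub>v x))^2 < m + e" if e: "0 < e" for e
  proof -
    have "Inf S < m + e" using e unfolding m_def by simp
    then obtain s where "s \<in> S" "s < m + e" using cInf_less_iff[OF S_ne bdd] by auto
    then show ?thesis unfolding S_def by auto
  qed
  define H where "H = mat_adjoint N * N"
  have H: "H \<in> carrier_mat n n" using N unfolding H_def by simp
  have Hx: "H *\<^sub>v x = mat_adjoint N *\<^sub>v (N *\<^sub>v x)" if "x \<in> carrier_vec n" for x
    unfolding H_def by (rule adjN_mult[OF N that])
  have "\<exists>v. v \<in> carrier_vec n \<and> v \<noteq> 0\<^sub>v n \<and> H *\<^sub>v v = complex_of_real m \<cdot>\<^sub>v v"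
  proof (rule ccontr)
    assume noev: "\<not> ?thesis"
    define G where "G = H - complex_of_real m \<cdot>\<^sub>m 1\<^sub>m n"
    have G: "G \<in> carrier_mat n n" unfolding G_def by (intro minus_carrier_mat smult_carrier_mat one_carrier_mat)
    have Gx: "G *\<^sub>v x = H *\<^sub>v x - complex_of_real m \<cdot>\<^sub>v x" if x: "x \<in> carrier_vec n" for x
      unfolding G_def using minus_mult_distrib_mat_vec[OF H _ x, of "complex_of_real m \<cdot>\<^sub>m 1\<^sub>m n"]
        smult_one_mult_vec[OF x] by simp
    have inj: "x = 0\<^sub>v n" if x: "x \<in> carrier_vec n" and "G *\<^sub>v x = 0\<^sub>v n" for x
    proof (rule ccontr)
      assume "x \<noteq> 0\<^sub>v n"
      moreover have "H *\<^sub>v x = complex_of_real m \<cdot>\<^sub>v x"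
        using vec_diff_zero[of "H *\<^sub>v x" n "complex_of_real m \<cdot>\<^sub>v x"] that Gx H by simp
      ultimately show False using noev x by auto
    qed
    from minv_props[OF G inj] have Gi: "minv G \<in> carrier_mat n n" "minv G * G = 1\<^sub>m n" by auto
    have lowG: "nrm x \<le> fro (minv G) * nrm (G *\<^sub>v x)" if x: "x \<in> carrier_vec n" for x
    proof -
      have "minv G *\<^sub>v (G *\<^sub>v x) = (minv G * G) *\<^sub>v x" by (rule assoc_mult_mat_vec[OF Gi(1) G x, symmetric])
      also have "\<dots> = x" using Gi x by simp
      finally have "x = minv G *\<^sub>v (G *\<^sub>v x)" by simp
      then have "nrm x = nrm (minv G *\<^sub>v (G *\<^sub>v x))" by simp
      also have "\<dots> \<le> fro (minv G) * nrm (G *\<^sub>v x)" using nrm_mult[OF Gi(1)] G x by simp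
      finally show ?thesis .
    qed
    have ipH: "ip (H *\<^sub>v a) b = ip (N *\<^sub>v a) (N *\<^sub>v b)" if "a \<in> carrier_vec n" "b \<in> carrier_vec n" for a b
    proof -
      have "ip (H *\<^sub>v a) b = cnj (ip b (mat_adjoint N *\<^sub>v (N *\<^sub>v a)))"
        using ip_cnj[of b "H *\<^sub>v a"] that H Hx N by simp
      also have "\<dots> = cnj (ip (N *\<^sub>v b) (N *\<^sub>v a))" using ip_adj[OF N that(2), of "N *\<^sub>v a"] N that by simp
      also have "\<dots> = ip (N *\<^sub>v a) (N *\<^sub>v b)" using ip_cnj[of "N *\<^sub>v a" "N *\<^sub>v b"] N that by simp
      finally show ?thesis .
    qed
    have ipH2: "ip a (H *\<^sub>v b) = ip (N *\<^sub>v a) (N *\<^sub>v b)" if "a \<in> carrier_vec n" "b \<in> carrier_vec n" for a b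
      using ip_adj[OF N that(1), of "N *\<^sub>v b"] N that Hx by simp
    have herm: "ip (G *\<^sub>v a) b = ip a (G *\<^sub>v b)" if "a \<in> carrier_vec n" "b \<in> carrier_vec n" for a b
    proof -
      have "ip (G *\<^sub>v a) b = ip (H *\<^sub>v a) b - complex_of_real m * ip a b"
        using Gx[OF that(1)] ip_diff_left[of "H *\<^sub>v a" n "complex_of_real m \<cdot>\<^sub>v a"] H that
        by (simp add: ip_smult_left)
      moreover have "ip a (G *\<^sub>v b) = ip a (H *\<^sub>v b) - complex_of_real m * ip a b"
        using Gx[OF that(2)] ip_diff_right[of "H *\<^sub>v b" n "complex_of_real m \<cdot>\<^sub>v b" a] H that
        by (simp add: ip_smult_right[OF that(1) that(2)])
      ultimately show ?thesis using ipH[OF that] ipH2[OF that] by simp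
    qed
    define q where "q x = (nrm (N *\<^sub>v x))^2 - m * (nrm x)^2" for x
    have q0: "0 \<le> q x" if "x \<in> carrier_vec n" for x using m_low[OF that] unfolding q_def by simp
    have ipq: "ip (G *\<^sub>v x) x = complex_of_real (q x)" if x: "x \<in> carrier_vec n" for x
    proof -
      have "ip (G *\<^sub>v x) x = ip (H *\<^sub>v x) x - complex_of_real m * ip x x"
        using Gx[OF x] ip_diff_left[of "H *\<^sub>v x" n "complex_of_real m \<cdot>\<^sub>v x"] H x
        by (simp add: ip_smult_left)
      then show ?thesis using ipH[OF x x] unfolding q_def by (simp add: ip_self)
    qed
    define K where "K = fro G + 1"
    have K: "0 < K" unfolding K_def using fro_ge0[of G] by linarith
    have key: "(nrm (G *\<^sub>v x))^2 \<le> K * q x" if x: "x \<in> carrier_vec n" for x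
    proof -
      define g where "g = G *\<^sub>v x"
      have g: "g \<in> carrier_vec n" unfolding g_def using G x by simp
      have Gg: "G *\<^sub>v g \<in> carrier_vec n" using G g by simp
      define t where "t = 1 / K"
      define y where "y = x - complex_of_real t \<cdot>\<^sub>v g"
      have y: "y \<in> carrier_vec n" unfolding y_def using x g by simp
      have Gy: "G *\<^sub>v y = g - complex_of_real t \<cdot>\<^sub>v (G *\<^sub>v g)"
        unfolding y_def g_def using mult_minus_distrib_mat_vec[OF G x, of "complex_of_real t \<cdot>\<^sub>v (G *\<^sub>v x)"]
          mult_mat_vec[OF G, of "G *\<^sub>v x"] G x by simp
      have e1: "ip (G *\<^sub>v y) y = ip g y - complex_of_real t * ip (G *\<^sub>v g) y"
        unfolding Gy using ip_diff_left[OF g, of "complex_of_real t \<cdot>\<^sub>v (G *\<^sub>v g)" y] Gg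
        by (simp add: ip_smult_left)
      have e2: "ip g y = ip g x - complex_of_real t * ip g g"
        unfolding y_def using ip_diff_right[OF x, of "complex_of_real t \<cdot>\<^sub>v g" g] g
        by (simp add: ip_smult_right[OF g g])
      have e3: "ip (G *\<^sub>v g) y = ip (G *\<^sub>v g) x - complex_of_real t * ip (G *\<^sub>v g) g"
        unfolding y_def using ip_diff_right[OF x, of "complex_of_real t \<cdot>\<^sub>v g" "G *\<^sub>v g"] g Gg
        by (simp add: ip_smult_right[OF Gg g])
      have e4: "ip (G *\<^sub>v g) x = ip g g" using herm[OF g x] unfolding g_def by simp
      have e: "ip (G *\<^sub>v y) y = ip g x - 2 * complex_of_real t * ip g g
          + (complex_of_real t)^2 * ip (G *\<^sub>v g) g"
        unfolding e1 e2 e3 e4 by (simp add: algebra_simps power2_eq_square)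
      have gx: "ip g x = complex_of_real (q x)" unfolding g_def by (rule ipq[OF x])
      have "Re (ip (G *\<^sub>v g) g) \<le> cmod (ip (G *\<^sub>v g) g)" by (rule complex_Re_le_cmod)
      also have "\<dots> \<le> nrm (G *\<^sub>v g) * nrm g" using ip_cs[of "G *\<^sub>v g" g] G g by simp
      also have "\<dots> \<le> (fro G * nrm g) * nrm g" using nrm_mult[OF G g] by (intro mult_right_mono) auto
      also have "\<dots> \<le> K * (nrm g)^2" unfolding K_def by (simp add: power2_eq_square algebra_simps)
      finally have bnd: "Re (ip (G *\<^sub>v g) g) \<le> K * (nrm g)^2" .
      have "q y = Re (ip (G *\<^sub>v y) y)" using ipq[OF y] by simp
      also have "\<dots> = q x - 2 * t * (nrm g)^2 + t^2 * Re (ip (G *\<^sub>v g) g)"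
        unfolding e gx by (simp add: ip_self)
      also have "\<dots> \<le> q x - 2 * t * (nrm g)^2 + t^2 * (K * (nrm g)^2)"
        using bnd by (intro add_left_mono mult_left_mono) auto
      also have "\<dots> = q x - (nrm g)^2 / K" unfolding t_def using K by (simp add: field_simps power2_eq_square)
      finally have "0 \<le> q x - (nrm g)^2 / K" using q0[OF y] by linarith
      then show ?thesis using K unfolding g_def by (simp add: field_simps)
    qed
    define F where "F = (fro (minv G))^2 * K"
    have F0: "0 \<le> F" unfolding F_def using K by simp
    define e where "e = 1 / (F + 1)"
    have e0: "0 < e" unfolding e_def using F0 by simp
    obtain x where x: "x \<in> carrier_vec n" "nrm x = 1" "(nrm (N *\<^sub>v x))^2 < m + e"
      using approx[OF e0] by blast
    have qx: "q x < e" using x unfolding q_def by simp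
    have "1 = (nrm x)^2" using x by simp
    also have "\<dots> \<le> (fro (minv G) * nrm (G *\<^sub>v x))^2" using lowG[OF x(1)] by (intro power_mono) auto
    also have "\<dots> = (fro (minv G))^2 * (nrm (G *\<^sub>v x))^2" by (simp add: power_mult_distrib)
    also have "\<dots> \<le> (fro (minv G))^2 * (K * q x)" using key[OF x(1)] by (intro mult_left_mono) auto
    also have "\<dots> = F * q x" unfolding F_def by simp
    also have "\<dots> \<le> F * e" using qx F0 by (intro mult_left_mono) auto
    also have "\<dots> < 1" unfolding e_def using F0 by (simp add: field_simps)
    finally show False by simp
  qed
  then show ?thesis using m_low unfolding H_def by blast
qed

lemma eig_bound: fixes N :: "complex mat"
  assumes N: "N \<in> carrier_mat n n" and n: "0 < n"
  shows "0 \<le> last (herm_eigs (mat_adjoint N * N))"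
    and "\<And>x. x \<in> carrier_vec n \<Longrightarrow> last (herm_eigs (mat_adjoint N * N)) * (nrm x)^2 \<le> (nrm (N *\<^sub>v x))^2"
proof -
  define H where "H = mat_adjoint N * N"
  have H: "H \<in> carrier_mat n n" using N unfolding H_def by simp
  obtain as where as: "char_poly H = (\<Prod>a\<leftarrow>as. [:- a, 1:])" "length as = n"
    "herm_eigs H = rev (sort (map Re as))" using herm_eigs_ex[OF H] by blast
  have ne: "map Re as \<noteq> []" using as(2) n by auto
  have L: "last (herm_eigs H) = Min (set (map Re as))" using as(3) last_rev_sort[OF ne] by simp
  have root_ev: "\<exists>v. v \<in> carrier_vec n \<and> v \<noteq> 0\<^sub>v n \<and> H *\<^sub>v v = a \<cdot>\<^sub>v v" if "a \<in> set as" for a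
  proof -
    have "poly (char_poly H) a = 0" unfolding as(1) by (rule linear_poly_root[OF that])
    then have "eigenvalue H a" using eigenvalue_root_char_poly[OF H] by simp
    then show ?thesis using H unfolding eigenvalue_def eigenvector_def by auto
  qed
  have "Min (set (map Re as)) \<in> set (map Re as)" using ne by (intro Min_in) auto
  then obtain a where a: "a \<in> set as" "Min (set (map Re as)) = Re a" by auto
  from root_ev[OF a(1)] obtain v where "v \<in> carrier_vec n" "v \<noteq> 0\<^sub>v n" "H *\<^sub>v v = a \<cdot>\<^sub>v v" by blast
  from ev_real[OF N this[unfolded H_def]] have "0 \<le> Re a" by simp
  then show "0 \<le> last (herm_eigs (mat_adjoint N * N))" using L a(2) unfolding H_def by simp
  fix x :: "complex vec" assume x: "x \<in> carrier_vec n"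
  obtain m v where m: "\<forall>x\<in>carrier_vec n. m * (nrm x)^2 \<le> (nrm (N *\<^sub>v x))^2"
    and v: "v \<in> carrier_vec n" "v \<noteq> 0\<^sub>v n" "H *\<^sub>v v = complex_of_real m \<cdot>\<^sub>v v"
    using min_eig_exists[OF N n] unfolding H_def by blast
  have "eigenvalue H (complex_of_real m)" unfolding eigenvalue_def eigenvector_def using v H by auto
  then have "poly (char_poly H) (complex_of_real m) = 0" using eigenvalue_root_char_poly[OF H] by simp
  then obtain a where a: "a \<in> set as" "poly [:-a,1:] (complex_of_real m) = 0"
    unfolding as(1) poly_prod_list_zero_iff by auto
  then have "a = complex_of_real m" by simp
  then have "m \<in> set (map Re as)" using a(1) by force
  then have "Min (set (map Re as)) \<le> m" by simp
  then have "last (herm_eigs H) * (nrm x)^2 \<le> m * (nrm x)^2" unfolding L by (intro mult_right_mono) auto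
  also have "\<dots> \<le> (nrm (N *\<^sub>v x))^2" using m x by blast
  finally show "last (herm_eigs (mat_adjoint N * N)) * (nrm x)^2 \<le> (nrm (N *\<^sub>v x))^2" unfolding H_def .
qed

lemma ray_deriv:
  fixes f :: "complex \<Rightarrow> real"
  assumes "(f has_derivative (\<lambda>k. gw \<bullet> k)) (at (z + t *\<^sub>R h))"
  shows "((\<lambda>s. f (z + s *\<^sub>R h)) has_real_derivative (gw \<bullet> h)) (at t)"
proof -
  have d1: "((\<lambda>s. z + s *\<^sub>R h) has_derivative (\<lambda>s. s *\<^sub>R h)) (at t)"
    by (auto intro!: derivative_eq_intros)
  have "((\<lambda>s. f (z + s *\<^sub>R h)) has_derivative (\<lambda>s. gw \<bullet> (s *\<^sub>R h))) (at t)"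
    by (rule has_derivative_compose[OF d1 assms])
  moreover have "(\<lambda>s. gw \<bullet> (s *\<^sub>R h)) = (*) (gw \<bullet> h)" by (auto simp: mult.commute)
  ultimately show ?thesis unfolding has_field_derivative_def by simp
qed

lemma small_imp_zero: fixes D S :: real
  assumes "\<And>e. 0 < e \<Longrightarrow> \<bar>D\<bar> \<le> e * S" and "0 \<le> S" shows "D = 0"
proof (rule ccontr)
  assume "D \<noteq> 0"
  then have p: "0 < \<bar>D\<bar>" by simp
  define e where "e = \<bar>D\<bar> / (2 * (S + 1))"
  have e: "0 < e" unfolding e_def using p assms(2) by simp
  have "\<bar>D\<bar> \<le> e * S" using assms(1)[OF e] .
  also have "\<dots> = \<bar>D\<bar> * (S / (2 * (S + 1)))" unfolding e_def by simp
  also have "\<dots> < \<bar>D\<bar> * 1"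
    using p assms(2) by (intro mult_strict_left_mono) (auto simp: field_simps)
  finally show False by simp
qed

lemma hess_lower:
  fixes f :: "complex \<Rightarrow> real" and g H :: "complex \<Rightarrow> complex" and z :: complex
  assumes f0: "f z = 0" and fpos: "\<And>w. 0 \<le> f w"
    and gd: "\<forall>\<^sub>F w in nhds z. (f has_derivative (\<lambda>h. g w \<bullet> h)) (at w)"
    and gH: "(g has_derivative H) (at z)" and bijH: "bij H"
  shows "\<exists>c>0. \<exists>r>0. \<forall>w. cmod (w - z) < r \<longrightarrow> c * (cmod (w - z))^2 \<le> f w"
proof -
  have bl: "bounded_linear H" using gH by (rule has_derivative_bounded_linear)
  interpret H: bounded_linear H by (rule bl)
  obtain r0 where r0: "r0 > 0" "\<And>w. dist w z < r0 \<Longrightarrow> (f has_derivative (\<lambda>h. g w \<bullet> h)) (at w)"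
    using gd unfolding eventually_nhds_metric by blast
  have gz: "g z = 0"
  proof -
    have fd: "(f has_derivative (\<lambda>h. g z \<bullet> h)) (at z)" using r0 by simp
    have "\<forall>\<^sub>F y in at z. f z \<le> f y" using f0 fpos by simp
    from has_derivative_local_min[OF fd this] have "(\<lambda>h. g z \<bullet> h) = (\<lambda>h. 0)" .
    then have "g z \<bullet> g z = 0" by metis
    then show ?thesis by simp
  qed
  have gapprox: "\<exists>d>0. \<forall>w. cmod (w - z) < d \<longrightarrow> cmod (g w - H (w - z)) \<le> e * cmod (w - z)"
    if e: "0 < e" for e
  proof -
    from gH[unfolded has_derivative_at_alt] e obtain d where
      "d > 0" "\<forall>y. norm (y - z) < d \<longrightarrow> norm (g y - g z - H (y - z)) \<le> e * norm (y - z)" by blast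
    then show ?thesis using gz by auto
  qed
  define Q where "Q h = H h \<bullet> h" for h
  have Qs: "Q (s *\<^sub>R h) = s^2 * Q h" for s h
    unfolding Q_def by (simp add: H.scaleR power2_eq_square)
  have ray: "\<exists>d>0. \<forall>h. cmod h < d \<longrightarrow> \<bar>f (z + h) - Q h / 2\<bar> \<le> e * (cmod h)^2"
    if e: "0 < e" for e
  proof -
    obtain d1 where d1: "d1 > 0" "\<And>w. cmod (w - z) < d1 \<Longrightarrow> cmod (g w - H (w - z)) \<le> e * cmod (w - z)"
      using gapprox[OF e] by blast
    define d where "d = min d1 r0"
    have d: "0 < d" unfolding d_def using d1 r0 by simp
    have "\<bar>f (z + h) - Q h / 2\<bar> \<le> e * (cmod h)^2" if h: "cmod h < d" for h
    proof (cases "h = 0")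
      case True
      then show ?thesis using f0 unfolding Q_def by simp
    next
      case False
      define phi where "phi t = f (z + t *\<^sub>R h) - t^2 / 2 * Q h" for t
      define phi' where "phi' t = g (z + t *\<^sub>R h) \<bullet> h - t * Q h" for t
      have der: "(phi has_real_derivative phi' t) (at t)" if t: "0 \<le> t" "t \<le> 1" for t
      proof -
        have "cmod (t *\<^sub>R h) \<le> cmod h" using t by (simp add: abs_le_iff mult_left_le_one_le)
        then have "dist (z + t *\<^sub>R h) z < r0" using h unfolding d_def by (simp add: dist_norm)
        from ray_deriv[OF r0(2)[OF this]]
        have "((\<lambda>s. f (z + s *\<^sub>R h)) has_real_derivative (g (z + t *\<^sub>R h) \<bullet> h)) (at t)" .
        then show ?thesis unfolding phi_def phi'_def
          by (auto intro!: derivative_eq_intros simp: power2_eq_square algebra_simps)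
      qed
      obtain t where t: "0 < t" "t < 1" "phi 1 - phi 0 = (1 - 0) * phi' t"
        using MVT2[of 0 1 phi phi'] der by auto
      have "cmod (t *\<^sub>R h) = t * cmod h" using t by simp
      also have "\<dots> \<le> cmod h" using t by (simp add: mult_left_le_one_le)
      also have "\<dots> < d1" using h unfolding d_def by simp
      finally have "cmod (t *\<^sub>R h) < d1" .
      then have b: "cmod (g (z + t *\<^sub>R h) - H (t *\<^sub>R h)) \<le> e * cmod (t *\<^sub>R h)"
        using d1(2)[of "z + t *\<^sub>R h"] by simp
      have "phi' t = (g (z + t *\<^sub>R h) - H (t *\<^sub>R h)) \<bullet> h"
        unfolding phi'_def Q_def by (simp add: H.scaleR inner_diff_left)
      then have "\<bar>phi' t\<bar> \<le> cmod (g (z + t *\<^sub>R h) - H (t *\<^sub>R h)) * cmod h"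
        by (simp add: Cauchy_Schwarz_ineq2)
      also have "\<dots> \<le> e * cmod (t *\<^sub>R h) * cmod h" using b by (intro mult_right_mono) auto
      also have "\<dots> \<le> e * (cmod h)^2" using t e
        by (simp add: power2_eq_square mult_left_le_one_le mult.assoc mult_left_mono)
      finally have "\<bar>phi' t\<bar> \<le> e * (cmod h)^2" .
      moreover have "phi 1 - phi 0 = f (z + h) - Q h / 2" unfolding phi_def using f0 by simp
      ultimately show ?thesis using t(3) by simp
    qed
    then show ?thesis using d by blast
  qed
  \<comment> \<open>symmetry of H (Dieudonne)\<close>
  have sym: "H u \<bullet> v = H v \<bullet> u" for u v
  proof -
    define S where "S = 4 * (cmod u + cmod v)^2"
    have "\<bar>H v \<bullet> u - H u \<bullet> v\<bar> \<le> e * S" if e: "0 < e" for e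
    proof -
      obtain d1 where d1: "d1 > 0" "\<And>w. cmod (w - z) < d1 \<Longrightarrow> cmod (g w - H (w - z)) \<le> e * cmod (w - z)"
        using gapprox[OF e] by blast
      define d where "d = min d1 r0"
      have d: "0 < d" unfolding d_def using d1 r0 by simp
      define t where "t = d / (2 * (cmod u + cmod v + 1))"
      have pos2: "0 < 2 * (cmod u + cmod v + 1)" by (rule mult_pos_pos) (simp_all add: add_nonneg_pos)
      have t0: "0 < t" unfolding t_def using d pos2 by (rule divide_pos_pos)
      have tsmall: "t * (cmod u + cmod v) < d"
      proof -
        have "t * (cmod u + cmod v) = d * ((cmod u + cmod v) / (2 * (cmod u + cmod v + 1)))"
          unfolding t_def by simp
        also have "\<dots> < d * 1"
          using d pos2 by (intro mult_strict_left_mono) (auto simp: field_simps)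
        finally show ?thesis by simp
      qed
      have claim: "\<bar>f (z + t *\<^sub>R a + t *\<^sub>R b) - f (z + t *\<^sub>R a) - f (z + t *\<^sub>R b) + f z - t^2 * (H b \<bullet> a)\<bar>
          \<le> 2 * e * t^2 * (cmod u + cmod v)^2"
        if ab: "cmod a + cmod b = cmod u + cmod v" for a b
      proof -
        define psi where "psi s = f (z + t *\<^sub>R b + s *\<^sub>R a) - f (z + s *\<^sub>R a)" for s
        define psi' where "psi' s = g (z + t *\<^sub>R b + s *\<^sub>R a) \<bullet> a - g (z + s *\<^sub>R a) \<bullet> a" for s
        have small1: "cmod (t *\<^sub>R b + s *\<^sub>R a) < d" and small2: "cmod (s *\<^sub>R a) < d"
          if s: "0 \<le> s" "s \<le> t" for s
        proof -
          have "cmod (s *\<^sub>R a) = s * cmod a" using s by simp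
          also have "\<dots> \<le> t * cmod a" using s by (simp add: mult_right_mono)
          finally have sa: "cmod (s *\<^sub>R a) \<le> t * cmod a" .
          have "cmod (t *\<^sub>R b + s *\<^sub>R a) \<le> cmod (t *\<^sub>R b) + cmod (s *\<^sub>R a)"
            by (rule norm_triangle_ineq)
          also have "cmod (t *\<^sub>R b) = t * cmod b" using t0 by simp
          finally have pr: "cmod (t *\<^sub>R b + s *\<^sub>R a) \<le> t * cmod b + cmod (s *\<^sub>R a)" .
          have eq: "t * (cmod a + cmod b) = t * cmod a + t * cmod b" by (simp add: distrib_left)
          have nn: "0 \<le> t * cmod b" using t0 by simp
          have "cmod (t *\<^sub>R b + s *\<^sub>R a) \<le> t * (cmod a + cmod b)" "cmod (s *\<^sub>R a) \<le> t * (cmod a + cmod b)"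
            using sa pr eq nn by linarith+
          then show "cmod (t *\<^sub>R b + s *\<^sub>R a) < d" "cmod (s *\<^sub>R a) < d" using tsmall ab by auto
        qed
        have der: "(psi has_real_derivative psi' s) (at s)" if s: "0 \<le> s" "s \<le> t" for s
        proof -
          have r1: "dist ((z + t *\<^sub>R b) + s *\<^sub>R a) z < r0" using small1[OF s] unfolding d_def
            by (simp add: dist_norm add.assoc)
          have r2: "dist (z + s *\<^sub>R a) z < r0" using small2[OF s] unfolding d_def by (simp add: dist_norm)
          have D1: "((\<lambda>s. f ((z + t *\<^sub>R b) + s *\<^sub>R a)) has_real_derivative (g (z + t *\<^sub>R b + s *\<^sub>R a) \<bullet> a)) (at s)"
            by (rule ray_deriv) (use r0(2)[OF r1] in simp)
          have D2: "((\<lambda>s. f (z + s *\<^sub>R a)) has_real_derivative (g (z + s *\<^sub>R a) \<bullet> a)) (at s)"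
            by (rule ray_deriv) (use r0(2)[OF r2] in simp)
          show ?thesis unfolding psi_def psi'_def by (rule DERIV_diff[OF D1 D2])
        qed
        obtain s where s: "0 < s" "s < t" "psi t - psi 0 = (t - 0) * psi' s"
          using MVT2[of 0 t psi psi'] der t0 by auto
        define E1 where "E1 = g (z + t *\<^sub>R b + s *\<^sub>R a) - H (t *\<^sub>R b + s *\<^sub>R a)"
        define E2 where "E2 = g (z + s *\<^sub>R a) - H (s *\<^sub>R a)"
        have bE1: "cmod E1 \<le> e * (t * (cmod u + cmod v))"
        proof -
          have "cmod E1 \<le> e * cmod (t *\<^sub>R b + s *\<^sub>R a)" unfolding E1_def
            using d1(2)[of "z + t *\<^sub>R b + s *\<^sub>R a"] small1[of s] s unfolding d_def by (simp add: add.assoc)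
          also have "\<dots> \<le> e * (t * (cmod u + cmod v))"
          proof -
            have "cmod (t *\<^sub>R b + s *\<^sub>R a) \<le> t * cmod b + s * cmod a"
              using norm_triangle_ineq[of "t *\<^sub>R b" "s *\<^sub>R a"] t0 s by simp
            also have "\<dots> \<le> t * cmod b + t * cmod a" using s by (simp add: mult_right_mono)
            finally have X: "cmod (t *\<^sub>R b + s *\<^sub>R a) \<le> t * cmod b + t * cmod a" .
            have Y: "t * (cmod u + cmod v) = t * cmod b + t * cmod a"
              using arg_cong[OF ab, of "\<lambda>x. t * x"] by (simp add: distrib_left)
            have "cmod (t *\<^sub>R b + s *\<^sub>R a) \<le> t * (cmod u + cmod v)" using X Y by linarith
            then show ?thesis using e by (intro mult_left_mono) auto
          qed
          finally show ?thesis .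
        qed
        have bE2: "cmod E2 \<le> e * (t * (cmod u + cmod v))"
        proof -
          have "cmod E2 \<le> e * cmod (s *\<^sub>R a)" unfolding E2_def
            using d1(2)[of "z + s *\<^sub>R a"] small2[of s] s unfolding d_def by simp
          also have "\<dots> \<le> e * (t * (cmod u + cmod v))"
          proof -
            have "cmod (s *\<^sub>R a) \<le> t * cmod a" using s by (simp add: mult_right_mono)
            also have "\<dots> \<le> t * (cmod u + cmod v)" using ab t0 norm_ge_zero[of b] by (intro mult_left_mono) linarith+
            finally show ?thesis using e by (intro mult_left_mono) auto
          qed
          finally show ?thesis .
        qed
        have ps: "psi' s = t * (H b \<bullet> a) + (E1 - E2) \<bullet> a"
          unfolding psi'_def E1_def E2_def by (simp add: H.add H.scaleR inner_diff_left inner_add_left)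
        have "\<bar>(E1 - E2) \<bullet> a\<bar> \<le> cmod (E1 - E2) * cmod a" by (rule Cauchy_Schwarz_ineq2)
        also have "\<dots> \<le> (cmod E1 + cmod E2) * cmod a" by (intro mult_right_mono norm_triangle_ineq4) auto
        also have "\<dots> \<le> (2 * e * t * (cmod u + cmod v)) * (cmod u + cmod v)"
        proof -
          have q: "2 * e * t * (cmod u + cmod v) = e * (t * (cmod u + cmod v)) + e * (t * (cmod u + cmod v))"
            by (simp add: algebra_simps)
          have s1: "cmod E1 + cmod E2 \<le> 2 * e * t * (cmod u + cmod v)" using bE1 bE2 q by linarith
          have s2: "cmod a \<le> cmod u + cmod v" using ab norm_ge_zero[of b] by linarith
          have "0 \<le> 2 * e * t * (cmod u + cmod v)" using e t0 by simp
          from mult_mono[OF s1 s2 this norm_ge_zero] show ?thesis .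
        qed
        finally have bE: "\<bar>(E1 - E2) \<bullet> a\<bar> \<le> 2 * e * t * (cmod u + cmod v)^2" by (simp add: power2_eq_square)
        have "f (z + t *\<^sub>R a + t *\<^sub>R b) - f (z + t *\<^sub>R a) - f (z + t *\<^sub>R b) + f z - t^2 * (H b \<bullet> a)
              = t * ((E1 - E2) \<bullet> a)"
          using s(3) unfolding psi_def ps by (simp add: algebra_simps power2_eq_square)
        also have "\<bar>\<dots>\<bar> \<le> t * (2 * e * t * (cmod u + cmod v)^2)" using bE t0 by (simp add: abs_mult)
        finally show ?thesis by (simp add: power2_eq_square algebra_simps)
      qed
      define D where "D = f (z + t *\<^sub>R u + t *\<^sub>R v) - f (z + t *\<^sub>R u) - f (z + t *\<^sub>R v) + f z"
      define P where "P = 2 * e * t^2 * (cmod u + cmod v)^2"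
      have c1: "\<bar>D - t^2 * (H v \<bullet> u)\<bar> \<le> P" using claim[of u v] unfolding D_def P_def by simp
      have eqz: "z + t *\<^sub>R v + t *\<^sub>R u = z + t *\<^sub>R u + t *\<^sub>R v" by (simp add: algebra_simps)
      have c2: "\<bar>D - t^2 * (H u \<bullet> v)\<bar> \<le> P" using claim[of v u] eqz unfolding D_def P_def
        by (simp add: add.commute algebra_simps)
      have "\<bar>t^2 * (H v \<bullet> u) - t^2 * (H u \<bullet> v)\<bar> \<le> 2 * P"
        using c1 c2 unfolding abs_le_iff by linarith
      moreover have "t^2 * (H v \<bullet> u) - t^2 * (H u \<bullet> v) = t^2 * (H v \<bullet> u - H u \<bullet> v)"
        by (simp add: right_diff_distrib)
      moreover have "\<bar>t^2 * (H v \<bullet> u - H u \<bullet> v)\<bar> = t^2 * \<bar>H v \<bullet> u - H u \<bullet> v\<bar>" by (simp add: abs_mult)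
      moreover have "2 * P = t^2 * (e * S)" unfolding P_def S_def by (simp add: algebra_simps)
      ultimately have "t^2 * \<bar>H v \<bullet> u - H u \<bullet> v\<bar> \<le> t^2 * (e * S)" by simp
      then show ?thesis using t0 by simp
    qed
    moreover have S0: "0 \<le> S" unfolding S_def by simp
    ultimately have "H v \<bullet> u - H u \<bullet> v = 0" by (rule small_imp_zero)
    then show ?thesis by simp
  qed
  have Qnn: "0 \<le> Q h" for h
  proof -
    have "-(2 * e * (cmod h)^2) \<le> Q h" if e: "0 < e" for e
    proof -
      obtain d where d: "d > 0" "\<And>k. cmod k < d \<Longrightarrow> \<bar>f (z + k) - Q k / 2\<bar> \<le> e * (cmod k)^2"
        using ray[OF e] by blast
      define s where "s = d / (2 * (cmod h + 1))"
      have p1: "0 < 2 * (cmod h + 1)" by (simp add: add_nonneg_pos)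
      have s0: "0 < s" unfolding s_def using d(1) p1 by (rule divide_pos_pos)
      have "cmod (s *\<^sub>R h) = d * (cmod h / (2 * (cmod h + 1)))" unfolding s_def using d p1 by simp
      also have "\<dots> < d * 1" using d p1 by (intro mult_strict_left_mono) (auto simp: field_simps)
      finally have "cmod (s *\<^sub>R h) < d" by simp
      from d(2)[OF this] have "\<bar>f (z + s *\<^sub>R h) - s^2 * Q h / 2\<bar> \<le> e * (s^2 * (cmod h)^2)"
        using s0 by (simp add: Qs power_mult_distrib)
      then have "- (e * (s^2 * (cmod h)^2)) \<le> s^2 * Q h / 2" using fpos[of "z + s *\<^sub>R h"]
        unfolding abs_le_iff by linarith
      then have X: "s^2 * (- (2 * e * (cmod h)^2)) \<le> s^2 * Q h" by (simp add: algebra_simps)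
      have sp: "0 < s^2" using s0 by simp
      show ?thesis using mult_le_cancel_left_pos[OF sp, of "- (2 * e * (cmod h)^2)" "Q h"] X by blast
    qed
    note H1 = this
    show ?thesis
    proof (rule field_le_epsilon[where x=0 and y="Q h", simplified])
      fix e :: real assume e: "0 < e"
      define c where "c = 2 * (cmod h)^2 + 1"
      have c: "1 \<le> c" unfolding c_def by simp
      define e' where "e' = e / c"
      have e': "0 < e'" unfolding e'_def using e c by simp
      have "2 * e' * (cmod h)^2 \<le> e' * c" unfolding c_def using e' by (simp add: algebra_simps)
      also have "e' * c = e" unfolding e'_def using c by simp
      finally show "0 \<le> Q h + e" using H1[OF e'] by linarith
    qed
  qed
  have Qpos: "0 < Q h" if h: "h \<noteq> 0" for h
  proof (rule ccontr)
    assume "\<not> 0 < Q h"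
    then have Qh: "Q h = 0" using Qnn[of h] by simp
    define w where "w = H h"
    have w0: "w \<noteq> 0"
    proof
      assume "w = 0"
      then have "H h = H 0" unfolding w_def by (simp add: H.zero)
      then show False using h bijH by (metis bij_pointE)
    qed
    define a where "a = w \<bullet> w"
    have a: "0 < a" unfolding a_def using w0 by simp
    define b where "b = \<bar>Q w\<bar> + 1"
    have b: "0 < b" unfolding b_def by simp
    define s where "s = - a / b"
    have exp: "Q (h + s *\<^sub>R w) = Q h + 2 * s * a + s^2 * Q w"
    proof -
      have "Q (h + s *\<^sub>R w) = H h \<bullet> h + s * (H h \<bullet> w) + s * (H w \<bullet> h) + s^2 * Q w"
        unfolding Q_def by (simp add: H.add H.scaleR inner_add_left inner_add_right power2_eq_square algebra_simps)
      also have "H w \<bullet> h = H h \<bullet> w" by (rule sym)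
      finally show ?thesis unfolding Q_def a_def w_def by simp
    qed
    have "s^2 * Q w \<le> s^2 * \<bar>Q w\<bar>" by (intro mult_left_mono) auto
    also have "\<dots> < s^2 * b" unfolding b_def using a b unfolding s_def by (intro mult_strict_left_mono) auto
    also have "\<dots> = a * a / b" unfolding s_def using b by (simp add: power2_eq_square field_simps)
    finally have "Q (h + s *\<^sub>R w) < 2 * s * a + a * a / b" using exp Qh by simp
    also have "2 * s * a + a * a / b = - (a * a / b)" unfolding s_def using b by (simp add: field_simps)
    also have "\<dots> < 0" using a b by simp
    finally show False using Qnn[of "h + s *\<^sub>R w"] by simp
  qed
  have contQ: "continuous_on (sphere 0 1) Q" unfolding Q_def
    by (intro continuous_intros H.continuous_on continuous_on_id)
  obtain x0 where x0: "x0 \<in> sphere (0::complex) 1" "\<And>y. y \<in> sphere 0 1 \<Longrightarrow> Q x0 \<le> Q y"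
  proof -
    have "(1::complex) \<in> sphere 0 1" by simp
    then have "sphere (0::complex) 1 \<noteq> {}" by blast
    then show ?thesis using continuous_attains_inf[OF compact_sphere _ contQ] that by blast
  qed
  define c0 where "c0 = Q x0"
  have c0: "0 < c0" unfolding c0_def using x0(1) by (intro Qpos) auto
  have Qlow: "c0 * (cmod h)^2 \<le> Q h" for h
  proof (cases "h = 0")
    case True then show ?thesis unfolding Q_def by (simp add: H.zero)
  next
    case False
    define k where "k = (1 / cmod h) *\<^sub>R h"
    have "k \<in> sphere 0 1" unfolding k_def using False by simp
    then have "c0 \<le> Q k" using x0(2) unfolding c0_def by blast
    also have "Q k = Q h / (cmod h)^2" unfolding k_def Qs by (simp add: power_divide)
    finally show ?thesis using False by (simp add: field_simps)
  qed
  obtain d where d: "d > 0" "\<And>k. cmod k < d \<Longrightarrow> \<bar>f (z + k) - Q k / 2\<bar> \<le> (c0 / 4) * (cmod k)^2"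
    using ray[of "c0 / 4"] c0 by auto
  have "c0 / 4 * (cmod (w - z))^2 \<le> f w" if w: "cmod (w - z) < d" for w
  proof -
    have "\<bar>f (z + (w - z)) - Q (w - z) / 2\<bar> \<le> (c0 / 4) * (cmod (w - z))^2" using d(2)[OF w] .
    then have "Q (w - z) / 2 - (c0 / 4) * (cmod (w - z))^2 \<le> f w" unfolding abs_le_iff by simp
    moreover have "c0 * (cmod (w - z))^2 / 2 \<le> Q (w - z) / 2" using Qlow[of "w - z"] by simp
    ultimately show ?thesis by simp
  qed
  then show ?thesis using c0 d(1) by (intro exI[of _ "c0 / 4"] conjI exI[of _ d]) auto
qed

lemma mult_carrier_dims: "A * B \<in> carrier_mat (dim_row A) (dim_col B)"
  unfolding carrier_mat_def by simp

lemma polyP_carrier: "polyP n Pc d s \<in> carrier_mat n n"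
proof -
  have "foldr (\<lambda>j M. (s ^ j) \<cdot>\<^sub>m Pc j + M) js (0\<^sub>m n n) \<in> carrier_mat n n" for js
  proof (induction js)
    case Nil then show ?case by simp
  next
    case (Cons j js)
    then show ?case unfolding foldr.simps o_def by (rule add_carrier_mat)
  qed
  then show ?thesis unfolding polyP_def .
qed
lemma Rfun_carrier: assumes "C \<in> carrier_mat n k" "B \<in> carrier_mat k n"
  shows "Rfun n Pc d A B C s \<in> carrier_mat n n"
  unfolding Rfun_def using assms mult_carrier_dims[of "C * minv (s \<cdot>\<^sub>m 1\<^sub>m (dim_row A) - A)" B]
  by (intro add_carrier_mat) auto

lemma Rred_carrier: assumes "C \<in> carrier_mat n k" "B \<in> carrier_mat k n"
  shows "Rred n Pc d A B C V W s \<in> carrier_mat n n"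
  unfolding Rred_def using assms
    mult_carrier_dims[of "C * V * minv (s \<cdot>\<^sub>m (mat_adjoint W * V) - mat_adjoint W * A * V) * mat_adjoint W" B]
  by (intro add_carrier_mat) auto

lemma eta_last: assumes M: "M \<in> carrier_mat n n" and n: "0 < n"
  shows "eta n M = last (herm_eigs (mat_adjoint M * M))"
proof -
  have H: "mat_adjoint M * M \<in> carrier_mat n n" using M by simp
  obtain as where "length as = n" "herm_eigs (mat_adjoint M * M) = rev (sort (map Re as))"
    using herm_eigs_ex[OF H] by blast
  then have len: "length (herm_eigs (mat_adjoint M * M)) = n" by simp
  then have "herm_eigs (mat_adjoint M * M) \<noteq> []" using n by auto
  then show ?thesis unfolding eta_def using len by (simp add: last_conv_nth)
qed

lemma eta_nonneg: "M \<in> carrier_mat n n \<Longrightarrow> 0 < n \<Longrightarrow> 0 \<le> eta n M"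
  using eta_last eig_bound(1) by metis

lemma eta_le: assumes M: "M \<in> carrier_mat n n" and n: "0 < n" and v: "v \<in> carrier_vec n" "nrm v = 1"
  shows "eta n M \<le> (nrm (M *\<^sub>v v))^2"
  using eig_bound(2)[OF M n v(1)] v(2) eta_last[OF M n] by simp

lemma sigma_lower: fixes N :: "complex mat"
  assumes N: "N \<in> carrier_mat n n" and xi: "0 < xi" and s: "xi \<le> sigma_min N" and x: "x \<in> carrier_vec n"
  shows "xi * nrm x \<le> nrm (N *\<^sub>v x)"
proof (cases "n = 0")
  case True
  then have "nrm x = 0" using x unfolding nrm_def by simp
  then show ?thesis by simp
next
  case False
  define L where "L = last (herm_eigs (mat_adjoint N * N))"
  have sL: "xi \<le> sqrt L" using s unfolding sigma_min_def L_def .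
  then have "0 < sqrt L" using xi by linarith
  then have L0: "0 < L" by simp
  have "xi^2 \<le> (sqrt L)^2" using sL xi by (intro power_mono) auto
  then have xiL: "xi^2 \<le> L" using L0 by simp
  have "(xi * nrm x)^2 = xi^2 * (nrm x)^2" by (simp add: power_mult_distrib)
  also have "\<dots> \<le> L * (nrm x)^2" using xiL by (intro mult_right_mono) auto
  also have "\<dots> \<le> (nrm (N *\<^sub>v x))^2" unfolding L_def using eig_bound(2)[OF N _ x] False by simp
  finally show ?thesis by (rule power2_le_imp_le) simp
qed

lemma inv_bound: fixes M :: "complex mat"
  assumes M: "M \<in> carrier_mat n n" and a: "0 < a" and low: "\<And>x. x \<in> carrier_vec n \<Longrightarrow> a * nrm x \<le> nrm (M *\<^sub>v x)"
  shows "minv M \<in> carrier_mat n n" "M * minv M = 1\<^sub>m n" "minv M * M = 1\<^sub>m n"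
    and "\<And>y. y \<in> carrier_vec n \<Longrightarrow> nrm (minv M *\<^sub>v y) \<le> nrm y / a"
proof -
  have inj: "x = 0\<^sub>v n" if x: "x \<in> carrier_vec n" and "M *\<^sub>v x = 0\<^sub>v n" for x
  proof -
    have "a * nrm x \<le> 0" using low[OF x] that by simp
    then have "nrm x = 0" using a nrm_ge0[of x] by (simp add: mult_le_0_iff)
    then show ?thesis using nrm_zero_iff[OF x] by simp
  qed
  note mp = minv_props[OF M inj]
  show "minv M \<in> carrier_mat n n" "M * minv M = 1\<^sub>m n" "minv M * M = 1\<^sub>m n" using mp by auto
  fix y :: "complex vec" assume y: "y \<in> carrier_vec n"
  have my: "minv M *\<^sub>v y \<in> carrier_vec n" using mp y by auto
  have mi: "minv M \<in> carrier_mat n n" using mp by simp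
  have "M *\<^sub>v (minv M *\<^sub>v y) = (M * minv M) *\<^sub>v y" by (rule assoc_mult_mat_vec[OF M mi y, symmetric])
  also have "\<dots> = y" using mp y by simp
  finally have "a * nrm (minv M *\<^sub>v y) \<le> nrm y" using low[OF my] by simp
  then show "nrm (minv M *\<^sub>v y) \<le> nrm y / a" using a by (simp add: field_simps)
qed

lemma orth_nrm: fixes V :: "complex mat"
  assumes V: "V \<in> carrier_mat k p" and o: "orthonormal_cols V" and y: "y \<in> carrier_vec p"
  shows "nrm (V *\<^sub>v y) = nrm y"
proof -
  have Vy: "V *\<^sub>v y \<in> carrier_vec k" using V y by simp
  have "ip (V *\<^sub>v y) (V *\<^sub>v y) = ip y (mat_adjoint V *\<^sub>v (V *\<^sub>v y))" by (rule ip_adj[OF V y Vy])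
  also have "mat_adjoint V *\<^sub>v (V *\<^sub>v y) = (mat_adjoint V * V) *\<^sub>v y"
    by (rule adjN_mult[OF V y, symmetric])
  also have "\<dots> = y" using o V y unfolding orthonormal_cols_def by simp
  finally have "complex_of_real ((nrm (V *\<^sub>v y))^2) = complex_of_real ((nrm y)^2)" by (simp only: ip_self)
  then have "(nrm (V *\<^sub>v y))^2 = (nrm y)^2" by (simp only: of_real_eq_iff)
  then show ?thesis by (simp add: power2_eq_iff_nonneg)
qed

lemma orth_adj_nrm: fixes W :: "complex mat"
  assumes W: "W \<in> carrier_mat k p" and o: "orthonormal_cols W" and x: "x \<in> carrier_vec k"
  shows "nrm (mat_adjoint W *\<^sub>v x) \<le> nrm x"
proof -
  define a where "a = mat_adjoint W *\<^sub>v x"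
  have a: "a \<in> carrier_vec p" unfolding a_def by (rule mult_mat_vec_carrier[OF adj_carrier[OF W] x])
  have "complex_of_real ((nrm a)^2) = ip a a" by (simp add: ip_self)
  also have "\<dots> = ip (W *\<^sub>v a) x" unfolding a_def using ip_adj[OF W _ x, of a] a a_def by simp
  finally have "(nrm a)^2 = cmod (ip (W *\<^sub>v a) x)" by (metis norm_of_real abs_of_nonneg zero_le_power2)
  also have "\<dots> \<le> nrm (W *\<^sub>v a) * nrm x" using ip_cs[of "W *\<^sub>v a" x] W x by simp
  also have "\<dots> = nrm a * nrm x" using orth_nrm[OF W o a] by simp
  finally have "nrm a * nrm a \<le> nrm a * nrm x" by (simp add: power2_eq_square)
  then show ?thesis unfolding a_def[symmetric]
    by (cases "nrm a = 0") (auto simp: mult_le_cancel_left nrm_ge0 less_le)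
qed

lemma hcat_dims[simp]: "dim_row (hcat X Y) = dim_row X" "dim_col (hcat X Y) = dim_col X + dim_col Y"
  unfolding hcat_def by auto

lemma hcat_index: "i < dim_row X \<Longrightarrow> j < dim_col X + dim_col Y \<Longrightarrow>
   hcat X Y $$ (i,j) = (if j < dim_col X then X $$ (i,j) else Y $$ (i, j - dim_col X))"
  unfolding hcat_def by auto

lemma hcat_mult_right: fixes X Y :: "complex mat"
  assumes r: "dim_row Y = dim_row X" and y: "y \<in> carrier_vec (dim_col Y)"
  shows "hcat X Y *\<^sub>v vec (dim_col X + dim_col Y) (\<lambda>j. if j < dim_col X then 0 else y $ (j - dim_col X)) = Y *\<^sub>v y"
    (is "_ *\<^sub>v ?x = _")
proof (rule eq_vecI)
  show "dim_vec (hcat X Y *\<^sub>v ?x) = dim_vec (Y *\<^sub>v y)" using r by simp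
  fix i assume "i < dim_vec (Y *\<^sub>v y)"
  then have i: "i < dim_row X" using r by simp
  let ?a = "dim_col X" and ?b = "dim_col Y"
  let ?f = "\<lambda>j. hcat X Y $$ (i,j) * ?x $ j"
  have "(hcat X Y *\<^sub>v ?x) $ i = (\<Sum>j\<in>{0..<?a + ?b}. ?f j)"
    using i by (simp add: mult_mat_vec_def scalar_prod_def)
  also have "\<dots> = (\<Sum>j\<in>{0..<?a}. ?f j) + (\<Sum>j\<in>{?a..<?a + ?b}. ?f j)"
    by (rule sum.atLeastLessThan_concat[symmetric]) auto
  also have "(\<Sum>j\<in>{0..<?a}. ?f j) = 0" by (intro sum.neutral) auto
  also have "(\<Sum>j\<in>{?a..<?a + ?b}. ?f j) = (\<Sum>j\<in>{0 + ?a..<?b + ?a}. ?f j)" by (simp add: add.commute)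
  also have "\<dots> = (\<Sum>j\<in>{0..<?b}. ?f (j + ?a))" by (rule sum.shift_bounds_nat_ivl)
  also have "\<dots> = (\<Sum>j\<in>{0..<?b}. Y $$ (i,j) * y $ j)"
    using i by (intro sum.cong) (auto simp: hcat_index)
  also have "\<dots> = (Y *\<^sub>v y) $ i" using i r y by (simp add: mult_mat_vec_def scalar_prod_def)
  finally show "(hcat X Y *\<^sub>v ?x) $ i = (Y *\<^sub>v y) $ i" by simp
qed

lemma hcat_mult_left: fixes X Y :: "complex mat"
  assumes x: "x \<in> carrier_vec (dim_col X)"
  shows "hcat X Y *\<^sub>v vec (dim_col X + dim_col Y) (\<lambda>j. if j < dim_col X then x $ j else 0) = X *\<^sub>v x"
    (is "_ *\<^sub>v ?x = _")
proof (rule eq_vecI)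
  show "dim_vec (hcat X Y *\<^sub>v ?x) = dim_vec (X *\<^sub>v x)" by simp
  fix i assume "i < dim_vec (X *\<^sub>v x)"
  then have i: "i < dim_row X" by simp
  let ?a = "dim_col X" and ?b = "dim_col Y"
  let ?f = "\<lambda>j. hcat X Y $$ (i,j) * ?x $ j"
  have "(hcat X Y *\<^sub>v ?x) $ i = (\<Sum>j\<in>{0..<?a + ?b}. ?f j)"
    using i by (simp add: mult_mat_vec_def scalar_prod_def)
  also have "\<dots> = (\<Sum>j\<in>{0..<?a}. ?f j) + (\<Sum>j\<in>{?a..<?a + ?b}. ?f j)"
    by (rule sum.atLeastLessThan_concat[symmetric]) auto
  also have "(\<Sum>j\<in>{?a..<?a + ?b}. ?f j) = 0" by (intro sum.neutral) auto
  also have "(\<Sum>j\<in>{0..<?a}. ?f j) = (\<Sum>j\<in>{0..<?a}. X $$ (i,j) * x $ j)"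
    using i by (intro sum.cong) (auto simp: hcat_index)
  also have "\<dots> = (X *\<^sub>v x) $ i" using i x by (simp add: mult_mat_vec_def scalar_prod_def)
  finally show "(hcat X Y *\<^sub>v ?x) $ i = (X *\<^sub>v x) $ i" by simp
qed

lemma colspace_hcat_R: fixes X Y :: "complex mat" shows "dim_row Y = dim_row X \<Longrightarrow> colspace Y \<subseteq> colspace (hcat X Y)"
  unfolding colspace_def
proof clarify
  fix y :: "complex vec" assume r: "dim_row Y = dim_row X" and y: "y \<in> carrier_vec (dim_col Y)"
  show "\<exists>x. Y *\<^sub>v y = hcat X Y *\<^sub>v x \<and> x \<in> carrier_vec (dim_col (hcat X Y))"
    by (rule exI[of _ "vec (dim_col X + dim_col Y) (\<lambda>j. if j < dim_col X then 0 else y $ (j - dim_col X))"])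
       (simp add: hcat_mult_right[OF r y])
qed

lemma colspace_hcat_L: fixes X Y :: "complex mat" shows "colspace X \<subseteq> colspace (hcat X Y)"
  unfolding colspace_def
proof clarify
  fix x :: "complex vec" assume x: "x \<in> carrier_vec (dim_col X)"
  show "\<exists>z. X *\<^sub>v x = hcat X Y *\<^sub>v z \<and> z \<in> carrier_vec (dim_col (hcat X Y))"
    by (rule exI[of _ "vec (dim_col X + dim_col Y) (\<lambda>j. if j < dim_col X then x $ j else 0)"])
       (simp add: hcat_mult_left[OF x])
qed

lemma foldl_hcat_dim: "dim_row (foldl hcat Z Gs) = dim_row Z"
  by (induction Gs arbitrary: Z) auto

lemma colspace_foldl: fixes Z :: "complex mat" shows "colspace Z \<subseteq> colspace (foldl hcat Z Gs)"
proof (induction Gs arbitrary: Z)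
  case Nil then show ?case by simp
next
  case (Cons G Gs)
  have "colspace Z \<subseteq> colspace (hcat Z G)" by (rule colspace_hcat_L)
  also have "\<dots> \<subseteq> colspace (foldl hcat (hcat Z G) Gs)" by (rule Cons.IH)
  finally show ?case by simp
qed

lemma colspace_hcat_list: fixes G :: "complex mat" shows "dim_row G = m \<Longrightarrow> colspace G \<subseteq> colspace (hcat_list m (G # Gs))"
proof -
  assume G: "dim_row G = m"
  have "colspace G \<subseteq> colspace (hcat (0\<^sub>m m 0) G)" using G by (intro colspace_hcat_R) simp
  also have "\<dots> \<subseteq> colspace (foldl hcat (hcat (0\<^sub>m m 0) G) Gs)" by (rule colspace_foldl)
  finally show ?thesis unfolding hcat_list_def by simp
qed

lemma hcat_list_dim: "dim_row (hcat_list m Gs) = m"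
  unfolding hcat_list_def by (simp add: foldl_hcat_dim)

lemma pow1: "(M :: complex mat) \<in> carrier_mat k k \<Longrightarrow> M ^\<^sub>m 1 = M"
  by simp

lemma Vtil_first: fixes A B :: "complex mat"
  assumes A: "A \<in> carrier_mat k k" and q: "1 \<le> q"
    and Mi: "minv (A - lam \<cdot>\<^sub>m 1\<^sub>m k) \<in> carrier_mat k k"
  shows "colspace (minv (A - lam \<cdot>\<^sub>m 1\<^sub>m k) * B) \<subseteq> colspace (Vtil A B q lam)"
proof -
  have u: "[1..<Suc q] = 1 # [Suc 1..<Suc q]" using q by (intro upt_conv_Cons) simp
  have dr: "dim_row A = k" using A by simp
  show ?thesis unfolding Vtil_def dr u using Mi by (simp add: colspace_hcat_list)
qed

lemma Wtil_first: fixes A C :: "complex mat"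
  assumes A: "A \<in> carrier_mat k k" and q: "1 \<le> q"
    and Mi: "minv (mat_adjoint (A - lam \<cdot>\<^sub>m 1\<^sub>m k)) \<in> carrier_mat k k"
  shows "colspace (minv (mat_adjoint (A - lam \<cdot>\<^sub>m 1\<^sub>m k)) * mat_adjoint C) \<subseteq> colspace (Wtil A C q lam)"
proof -
  have u: "[1..<Suc q] = 1 # [Suc 1..<Suc q]" using q by (intro upt_conv_Cons) simp
  have dr: "dim_row A = k" using A by simp
  show ?thesis unfolding Wtil_def dr u using Mi by (simp add: colspace_hcat_list)
qed

lemma colspace_mem: fixes M :: "complex mat" shows "v \<in> carrier_vec (dim_col M) \<Longrightarrow> M *\<^sub>v v \<in> colspace M"
  unfolding colspace_def by auto

lemma shift_low: fixes xi rho :: real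
  assumes "xi * nrm x \<le> nrm t" "nrm t \<le> rho * nrm x + nrm m" "rho \<le> xi / 2"
  shows "xi / 2 * nrm x \<le> nrm m"
proof -
  have "rho * nrm x \<le> xi / 2 * nrm x" using assms(3) by (intro mult_right_mono) auto
  then show ?thesis using assms(1,2) by linarith
qed

lemma nrm_lin_bound: fixes a b :: "complex vec"
  assumes "a \<in> carrier_vec m" "b \<in> carrier_vec m"
  shows "nrm (c \<cdot>\<^sub>v a - b) \<le> cmod c * nrm a + nrm b" "nrm (b + c \<cdot>\<^sub>v a) \<le> nrm b + cmod c * nrm a"
  using nrm_diff[of "c \<cdot>\<^sub>v a" m b] nrm_add[of b m "c \<cdot>\<^sub>v a"] assms by (auto simp: nrm_smult)

lemma vec_alg1: fixes a1 a2 g :: "complex vec"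
  assumes "a1 \<in> carrier_vec k" "a2 \<in> carrier_vec k" "g \<in> carrier_vec k"
  shows "(c \<cdot>\<^sub>v a1 - g) - (c \<cdot>\<^sub>v a2 - g) = c \<cdot>\<^sub>v (a1 - a2)"
  using assms by (intro eq_vecI) (auto simp: algebra_simps)

lemma ip_self_cmod: assumes "ip x x = a" shows "(nrm x)^2 = cmod a"
proof -
  have "a = complex_of_real ((nrm x)^2)" using assms ip_self[of x] by simp
  then show ?thesis by (simp add: norm_power)
qed

lemma cancel_sq: fixes a c :: real assumes "0 \<le> a" "0 \<le> c" "a * a \<le> a * c" shows "a \<le> c"
proof (cases "a = 0")
  case True then show ?thesis using assms by simp
next
  case False then have "0 < a" using assms by simp
  then show ?thesis using assms(3) mult_le_cancel_left_pos by blast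
qed

lemma ip_zero_right: "x \<in> carrier_vec n \<Longrightarrow> ip x (0\<^sub>v n) = 0" unfolding ip_def by simp

lemma main_est:
  fixes A B C V W :: "complex mat" and s lam lstar :: complex and xi :: real
  assumes A: "A \<in> carrier_mat k k" and B: "B \<in> carrier_mat k n" and C: "C \<in> carrier_mat n k"
    and xi: "0 < xi"
    and lowT: "\<And>x. x \<in> carrier_vec k \<Longrightarrow> xi * nrm x \<le> nrm ((A - lstar \<cdot>\<^sub>m 1\<^sub>m k) *\<^sub>v x)"
    and V: "V \<in> carrier_mat k p" and W: "W \<in> carrier_mat k p"
    and oV: "orthonormal_cols V" and oW: "orthonormal_cols W"
    and lowT2: "\<And>x. x \<in> carrier_vec p \<Longrightarrow>
        xi * nrm x \<le> nrm ((mat_adjoint W * A * V - lstar \<cdot>\<^sub>m (mat_adjoint W * V)) *\<^sub>v x)"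
    and q: "1 \<le> q"
    and colV: "colspace (Vtil A B q lam) \<subseteq> colspace V"
    and colW: "colspace (Wtil A C q lam) \<subseteq> colspace W"
    and ds: "cmod (s - lstar) \<le> xi / 2" and dl: "cmod (lam - lstar) \<le> xi / 2"
    and det: "det (Rred n Pc d A B C V W s) = 0"
  shows "\<exists>v. v \<in> carrier_vec n \<and> nrm v = 1 \<and>
     nrm (Rfun n Pc d A B C s *\<^sub>v v) \<le> (16 * fro (mat_adjoint C) * fro B / xi^3) * (cmod (s - lam))^2"
proof -
  define M where "M = s \<cdot>\<^sub>m 1\<^sub>m k - A"
  define N where "N = A - lam \<cdot>\<^sub>m 1\<^sub>m k"
  define T where "T = A - lstar \<cdot>\<^sub>m 1\<^sub>m k"
  define Wh where "Wh = mat_adjoint W"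
  define Ks where "Ks = s \<cdot>\<^sub>m (Wh * V) - Wh * A * V"
  define T2 where "T2 = Wh * A * V - lstar \<cdot>\<^sub>m (Wh * V)"
  have M: "M \<in> carrier_mat k k" unfolding M_def using A by (intro minus_carrier_mat) auto
  have N: "N \<in> carrier_mat k k" unfolding N_def by (intro minus_carrier_mat) auto
  have T: "T \<in> carrier_mat k k" unfolding T_def by (intro minus_carrier_mat) auto
  have Wh: "Wh \<in> carrier_mat p k" unfolding Wh_def using W by simp
  have WhV: "Wh * V \<in> carrier_mat p p" using Wh V by simp
  have WhAV: "Wh * A * V \<in> carrier_mat p p" using Wh A V by (meson mult_carrier_mat)
  have Ks: "Ks \<in> carrier_mat p p" unfolding Ks_def using WhAV by (intro minus_carrier_mat) auto
  have T2: "T2 \<in> carrier_mat p p" unfolding T2_def using WhV by (intro minus_carrier_mat) auto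
  have Tx: "T *\<^sub>v x = A *\<^sub>v x - lstar \<cdot>\<^sub>v x" if "x \<in> carrier_vec k" for x
    unfolding T_def using minus_mult_distrib_mat_vec[OF A _ that, of "lstar \<cdot>\<^sub>m 1\<^sub>m k"] smult_one_mult_vec[OF that]
    by simp
  have Nx: "N *\<^sub>v x = A *\<^sub>v x - lam \<cdot>\<^sub>v x" if "x \<in> carrier_vec k" for x
    unfolding N_def using minus_mult_distrib_mat_vec[OF A _ that, of "lam \<cdot>\<^sub>m 1\<^sub>m k"] smult_one_mult_vec[OF that]
    by simp
  have Mx: "M *\<^sub>v x = s \<cdot>\<^sub>v x - A *\<^sub>v x" if "x \<in> carrier_vec k" for x
    unfolding M_def using minus_mult_distrib_mat_vec[OF _ A that, of "s \<cdot>\<^sub>m 1\<^sub>m k"] smult_one_mult_vec[OF that]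
    by simp
  have WhVx: "(Wh * V) *\<^sub>v x = Wh *\<^sub>v (V *\<^sub>v x)" if "x \<in> carrier_vec p" for x
    by (rule assoc_mult_mat_vec[OF Wh V that])
  have WhAVx: "(Wh * A * V) *\<^sub>v x = Wh *\<^sub>v (A *\<^sub>v (V *\<^sub>v x))" if x: "x \<in> carrier_vec p" for x
  proof -
    have "(Wh * A * V) *\<^sub>v x = (Wh * A) *\<^sub>v (V *\<^sub>v x)" using Wh A V x by (intro assoc_mult_mat_vec) auto
    also have "\<dots> = Wh *\<^sub>v (A *\<^sub>v (V *\<^sub>v x))" using Wh A V x by (intro assoc_mult_mat_vec) auto
    finally show ?thesis .
  qed
  have Ksx: "Ks *\<^sub>v x = s \<cdot>\<^sub>v (Wh *\<^sub>v (V *\<^sub>v x)) - Wh *\<^sub>v (A *\<^sub>v (V *\<^sub>v x))" if x: "x \<in> carrier_vec p" for x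
    unfolding Ks_def using minus_mult_distrib_mat_vec[OF _ WhAV x, of "s \<cdot>\<^sub>m (Wh * V)"] WhV
      smult_mat_vec[OF WhV x] WhVx[OF x] WhAVx[OF x] by simp
  have T2x: "T2 *\<^sub>v x = Wh *\<^sub>v (A *\<^sub>v (V *\<^sub>v x)) - lstar \<cdot>\<^sub>v (Wh *\<^sub>v (V *\<^sub>v x))" if x: "x \<in> carrier_vec p" for x
    unfolding T2_def using minus_mult_distrib_mat_vec[OF WhAV _ x, of "lstar \<cdot>\<^sub>m (Wh * V)"] WhV
      smult_mat_vec[OF WhV x] WhVx[OF x] WhAVx[OF x] by simp
  have dA: "dim_row A = k" "dim_col A = k" using A by auto
  have half: "0 < xi / 2" using xi by simp
  have lowM: "xi / 2 * nrm x \<le> nrm (M *\<^sub>v x)" if x: "x \<in> carrier_vec k" for x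
  proof -
    have e: "T *\<^sub>v x = (s - lstar) \<cdot>\<^sub>v x - M *\<^sub>v x"
      unfolding Tx[OF x] Mx[OF x] using dA x by (intro eq_vecI) (auto simp: algebra_simps)
    have "nrm (T *\<^sub>v x) \<le> cmod (s - lstar) * nrm x + nrm (M *\<^sub>v x)"
      unfolding e using M x by (intro nrm_lin_bound(1)) auto
    from shift_low[OF lowT[OF x, folded T_def] this ds] show ?thesis .
  qed
  have lowN: "xi / 2 * nrm x \<le> nrm (N *\<^sub>v x)" if x: "x \<in> carrier_vec k" for x
  proof -
    have e: "T *\<^sub>v x = N *\<^sub>v x + (lam - lstar) \<cdot>\<^sub>v x"
      unfolding Tx[OF x] Nx[OF x] using dA x by (intro eq_vecI) (auto simp: algebra_simps)
    have "nrm (T *\<^sub>v x) \<le> nrm (N *\<^sub>v x) + cmod (lam - lstar) * nrm x"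
      unfolding e using N x by (intro nrm_lin_bound(2)) auto
    then have "nrm (T *\<^sub>v x) \<le> cmod (lam - lstar) * nrm x + nrm (N *\<^sub>v x)" by simp
    from shift_low[OF lowT[OF x, folded T_def] this dl] show ?thesis .
  qed
  have lowKs: "xi / 2 * nrm x \<le> nrm (Ks *\<^sub>v x)" if x: "x \<in> carrier_vec p" for x
  proof -
    have Vx: "V *\<^sub>v x \<in> carrier_vec k" using V x by simp
    have WVx: "Wh *\<^sub>v (V *\<^sub>v x) \<in> carrier_vec p" using Wh Vx by simp
    have WAVx: "Wh *\<^sub>v (A *\<^sub>v (V *\<^sub>v x)) \<in> carrier_vec p" using Wh A Vx by simp
    have e: "T2 *\<^sub>v x = (s - lstar) \<cdot>\<^sub>v (Wh *\<^sub>v (V *\<^sub>v x)) - Ks *\<^sub>v x"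
      unfolding T2x[OF x] Ksx[OF x] using WVx WAVx by (intro eq_vecI) (auto simp: algebra_simps)
    have "nrm (T2 *\<^sub>v x) \<le> cmod (s - lstar) * nrm (Wh *\<^sub>v (V *\<^sub>v x)) + nrm (Ks *\<^sub>v x)"
      unfolding e using Ks x WVx by (intro nrm_lin_bound(1)) auto
    also have "nrm (Wh *\<^sub>v (V *\<^sub>v x)) \<le> nrm x"
      using orth_adj_nrm[OF W oW Vx] orth_nrm[OF V oV x] unfolding Wh_def by simp
    then have "cmod (s - lstar) * nrm (Wh *\<^sub>v (V *\<^sub>v x)) \<le> cmod (s - lstar) * nrm x"
      by (intro mult_left_mono) auto
    finally have "nrm (T2 *\<^sub>v x) \<le> cmod (s - lstar) * nrm x + nrm (Ks *\<^sub>v x)" by simp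
    from shift_low[OF lowT2[OF x, folded Wh_def, folded T2_def] this ds] show ?thesis .
  qed
  note iM = inv_bound[OF M half lowM]
  note iN = inv_bound[OF N half lowN]
  note iK = inv_bound[OF Ks half lowKs]
  define X where "X = minv M"
  define Ni where "Ni = minv N"
  define Ki where "Ki = minv Ks"
  have X: "X \<in> carrier_mat k k" "M * X = 1\<^sub>m k" "X * M = 1\<^sub>m k"
    "\<And>y. y \<in> carrier_vec k \<Longrightarrow> nrm (X *\<^sub>v y) \<le> nrm y / (xi / 2)" using iM unfolding X_def by auto
  have Ni: "Ni \<in> carrier_mat k k" "N * Ni = 1\<^sub>m k" "Ni * N = 1\<^sub>m k"
    "\<And>y. y \<in> carrier_vec k \<Longrightarrow> nrm (Ni *\<^sub>v y) \<le> nrm y / (xi / 2)" using iN unfolding Ni_def by auto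
  have Ki: "Ki \<in> carrier_mat p p" "Ks * Ki = 1\<^sub>m p" "Ki * Ks = 1\<^sub>m p"
    "\<And>y. y \<in> carrier_vec p \<Longrightarrow> nrm (Ki *\<^sub>v y) \<le> nrm y / (xi / 2)" using iK unfolding Ki_def by auto
  have cancel: "P1 *\<^sub>v (P2 *\<^sub>v y) = y" if "P1 \<in> carrier_mat m m" "P2 \<in> carrier_mat m m" "P1 * P2 = 1\<^sub>m m"
    "y \<in> carrier_vec m" for P1 P2 :: "complex mat" and m y
  proof -
    have "P1 *\<^sub>v (P2 *\<^sub>v y) = (P1 * P2) *\<^sub>v y" using that by (intro assoc_mult_mat_vec[symmetric]) auto
    then show ?thesis using that by simp
  qed
  define Nh where "Nh = mat_adjoint N"
  have Nh: "Nh \<in> carrier_mat k k" unfolding Nh_def using N by simp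
  have Nh_inj: "x = 0\<^sub>v k" if x: "x \<in> carrier_vec k" and z: "Nh *\<^sub>v x = 0\<^sub>v k" for x
  proof -
    have Nix: "Ni *\<^sub>v x \<in> carrier_vec k" using Ni x by simp
    have "ip x x = ip (N *\<^sub>v (Ni *\<^sub>v x)) x" using cancel[OF N Ni(1) Ni(2) x] by simp
    also have "\<dots> = ip (Ni *\<^sub>v x) (Nh *\<^sub>v x)" unfolding Nh_def by (rule ip_adj[OF N Nix x])
    also have "\<dots> = 0" unfolding z by (rule ip_zero_right[OF Nix])
    finally have "nrm x = 0" by (simp add: ip_self)
    then show ?thesis using nrm_zero_iff[OF x] by simp
  qed
  note iNh = minv_props[OF Nh Nh_inj]
  define Nhi where "Nhi = minv Nh"
  have Nhi: "Nhi \<in> carrier_mat k k" "Nh * Nhi = 1\<^sub>m k" using iNh unfolding Nhi_def by auto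
  have Rr: "Rred n Pc d A B C V W s \<in> carrier_mat n n" by (rule Rred_carrier[OF C B])
  obtain v0 where v0: "v0 \<in> carrier_vec n" "v0 \<noteq> 0\<^sub>v n" "Rred n Pc d A B C V W s *\<^sub>v v0 = 0\<^sub>v n"
    using det det_0_iff_vec_prod_zero[OF Rr] by auto
  have nv0: "0 < nrm v0" using nrm_zero_iff[OF v0(1)] v0(2) nrm_ge0[of v0] by linarith
  define v where "v = complex_of_real (1 / nrm v0) \<cdot>\<^sub>v v0"
  have v: "v \<in> carrier_vec n" unfolding v_def using v0 by simp
  have nv: "nrm v = 1" unfolding v_def nrm_smult using nv0 by (simp add: norm_divide)
  have Rrv0: "Rred n Pc d A B C V W s *\<^sub>v v = 0\<^sub>v n"
  proof -
    have "complex_of_real (1 / nrm v0) \<cdot>\<^sub>v 0\<^sub>v n = 0\<^sub>v n" by (intro eq_vecI) auto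
    then show ?thesis unfolding v_def using mult_mat_vec[OF Rr v0(1)] v0(3) by simp
  qed
  define P where "P = polyP n Pc d s"
  have P: "P \<in> carrier_mat n n" unfolding P_def by (rule polyP_carrier)
  define b where "b = B *\<^sub>v v"
  have b: "b \<in> carrier_vec k" unfolding b_def using B v by simp
  have RredE: "Rred n Pc d A B C V W s = P + C * V * Ki * Wh * B"
    unfolding Rred_def Ki_def Ks_def Wh_def P_def by simp
  have RfunE: "Rfun n Pc d A B C s = P + C * X * B"
    unfolding Rfun_def X_def M_def P_def dA by simp
  have CXB: "C * X * B \<in> carrier_mat n n" using C X(1) B by (meson mult_carrier_mat)
  have CVKWB: "C * V * Ki * Wh * B \<in> carrier_mat n n" using C V Ki(1) Wh B by (meson mult_carrier_mat)
  have Xb: "X *\<^sub>v b \<in> carrier_vec k" using X(1) b by simp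
  have Whb: "Wh *\<^sub>v b \<in> carrier_vec p" using Wh b by simp
  have KWhb: "Ki *\<^sub>v (Wh *\<^sub>v b) \<in> carrier_vec p" using Ki(1) Whb by simp
  have VKWhb: "V *\<^sub>v (Ki *\<^sub>v (Wh *\<^sub>v b)) \<in> carrier_vec k" using V KWhb by simp
  have Rf_v: "Rfun n Pc d A B C s *\<^sub>v v = P *\<^sub>v v + C *\<^sub>v (X *\<^sub>v b)"
  proof -
    have "(C * X * B) *\<^sub>v v = (C * X) *\<^sub>v b" unfolding b_def using C X(1) B v by (intro assoc_mult_mat_vec) auto
    also have "\<dots> = C *\<^sub>v (X *\<^sub>v b)" using C X(1) b by (intro assoc_mult_mat_vec) auto
    finally show ?thesis unfolding RfunE using add_mult_distrib_mat_vec[OF P CXB v] by simp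
  qed
  have Rr_v: "Rred n Pc d A B C V W s *\<^sub>v v = P *\<^sub>v v + C *\<^sub>v (V *\<^sub>v (Ki *\<^sub>v (Wh *\<^sub>v b)))"
  proof -
    have "(C * V * Ki * Wh * B) *\<^sub>v v = (C * V * Ki * Wh) *\<^sub>v b" unfolding b_def
      using C V Ki(1) Wh B v by (intro assoc_mult_mat_vec) (auto intro: mult_carrier_mat)
    also have "\<dots> = (C * V * Ki) *\<^sub>v (Wh *\<^sub>v b)" using C V Ki(1) Wh b
      by (intro assoc_mult_mat_vec) (auto intro: mult_carrier_mat)
    also have "\<dots> = (C * V) *\<^sub>v (Ki *\<^sub>v (Wh *\<^sub>v b))" using C V Ki(1) Whb
      by (intro assoc_mult_mat_vec) (auto intro: mult_carrier_mat)
    also have "\<dots> = C *\<^sub>v (V *\<^sub>v (Ki *\<^sub>v (Wh *\<^sub>v b)))" using C V KWhb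
      by (intro assoc_mult_mat_vec) auto
    finally show ?thesis unfolding RredE using add_mult_distrib_mat_vec[OF P CVKWB v] by simp
  qed
  have Rfv: "Rfun n Pc d A B C s *\<^sub>v v = C *\<^sub>v (X *\<^sub>v b - V *\<^sub>v (Ki *\<^sub>v (Wh *\<^sub>v b)))"
  proof -
    have Pv: "P *\<^sub>v v \<in> carrier_vec n" using P v by simp
    have c1: "C *\<^sub>v (X *\<^sub>v b) \<in> carrier_vec n" using C Xb by simp
    have c2: "C *\<^sub>v (V *\<^sub>v (Ki *\<^sub>v (Wh *\<^sub>v b))) \<in> carrier_vec n" using C VKWhb by simp
    have z: "P *\<^sub>v v + C *\<^sub>v (V *\<^sub>v (Ki *\<^sub>v (Wh *\<^sub>v b))) = 0\<^sub>v n" using Rrv0 Rr_v by simp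
    have "Rfun n Pc d A B C s *\<^sub>v v = C *\<^sub>v (X *\<^sub>v b) - C *\<^sub>v (V *\<^sub>v (Ki *\<^sub>v (Wh *\<^sub>v b)))"
    proof (rule eq_vecI)
      fix i assume "i < dim_vec (C *\<^sub>v (X *\<^sub>v b) - C *\<^sub>v (V *\<^sub>v (Ki *\<^sub>v (Wh *\<^sub>v b))))"
      then have i: "i < n" using C by simp
      have "(P *\<^sub>v v) $ i + (C *\<^sub>v (V *\<^sub>v (Ki *\<^sub>v (Wh *\<^sub>v b)))) $ i = 0"
        using arg_cong[OF z, of "\<lambda>x. x $ i"] i c2 C by simp
      then show "(Rfun n Pc d A B C s *\<^sub>v v) $ i = (C *\<^sub>v (X *\<^sub>v b) - C *\<^sub>v (V *\<^sub>v (Ki *\<^sub>v (Wh *\<^sub>v b)))) $ i"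
        unfolding Rf_v using i c1 c2 Pv C P by (simp add: algebra_simps eq_neg_iff_add_eq_0)
    qed (use Rf_v c1 c2 Pv in simp)
    also have "\<dots> = C *\<^sub>v (X *\<^sub>v b - V *\<^sub>v (Ki *\<^sub>v (Wh *\<^sub>v b)))"
      by (rule mult_minus_distrib_mat_vec[OF C Xb VKWhb, symmetric])
    finally show ?thesis .
  qed
  \<comment> \<open>interpolation on the right\<close>
  define g where "g = Ni *\<^sub>v b"
  have g: "g \<in> carrier_vec k" unfolding g_def using Ni(1) b by simp
  have "g \<in> colspace (Ni * B)"
  proof -
    have "(Ni * B) *\<^sub>v v = g" unfolding g_def b_def using Ni(1) B v by (intro assoc_mult_mat_vec) auto
    moreover have "v \<in> carrier_vec (dim_col (Ni * B))" using v B by simp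
    ultimately show ?thesis using colspace_mem by metis
  qed
  also have "colspace (Ni * B) \<subseteq> colspace (Vtil A B q lam)"
    unfolding Ni_def N_def by (rule Vtil_first[OF A q]) (use Ni(1) in \<open>simp add: Ni_def N_def\<close>)
  also note colV
  finally obtain y where y: "y \<in> carrier_vec p" "V *\<^sub>v y = g" unfolding colspace_def using V by auto
  have bg: "b = N *\<^sub>v g" unfolding g_def using cancel[OF N Ni(1) Ni(2) b] by simp
  have Nx2: "N *\<^sub>v x = (s - lam) \<cdot>\<^sub>v x - M *\<^sub>v x" if x: "x \<in> carrier_vec k" for x
    unfolding Nx[OF x] Mx[OF x] using dA x by (intro eq_vecI) (auto simp: algebra_simps)
  have WhMV: "Wh *\<^sub>v (M *\<^sub>v (V *\<^sub>v x)) = Ks *\<^sub>v x" if x: "x \<in> carrier_vec p" for x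
  proof -
    have Vx: "V *\<^sub>v x \<in> carrier_vec k" using V x by simp
    have "Wh *\<^sub>v (M *\<^sub>v (V *\<^sub>v x)) = Wh *\<^sub>v (s \<cdot>\<^sub>v (V *\<^sub>v x) - A *\<^sub>v (V *\<^sub>v x))" using Mx[OF Vx] by simp
    also have "\<dots> = Wh *\<^sub>v (s \<cdot>\<^sub>v (V *\<^sub>v x)) - Wh *\<^sub>v (A *\<^sub>v (V *\<^sub>v x))"
      using Wh Vx A by (intro mult_minus_distrib_mat_vec) auto
    also have "Wh *\<^sub>v (s \<cdot>\<^sub>v (V *\<^sub>v x)) = s \<cdot>\<^sub>v (Wh *\<^sub>v (V *\<^sub>v x))" using mult_mat_vec[OF Wh Vx] by simp
    finally show ?thesis using Ksx[OF x] by simp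
  qed
  have Mg: "M *\<^sub>v g \<in> carrier_vec k" using M g by simp
  have Xg: "X *\<^sub>v g \<in> carrier_vec k" using X(1) g by simp
  have Whg: "Wh *\<^sub>v g \<in> carrier_vec p" using Wh g by simp
  define r where "r = Ki *\<^sub>v (Wh *\<^sub>v g)"
  have r: "r \<in> carrier_vec p" unfolding r_def using Ki(1) Whg by simp
  have Vr: "V *\<^sub>v r \<in> carrier_vec k" using V r by simp
  define z where "z = X *\<^sub>v g - V *\<^sub>v r"
  have z: "z \<in> carrier_vec k" unfolding z_def using Xg Vr by simp
  have E2: "X *\<^sub>v b = (s - lam) \<cdot>\<^sub>v (X *\<^sub>v g) - g"
  proof -
    have "X *\<^sub>v b = X *\<^sub>v ((s - lam) \<cdot>\<^sub>v g) - X *\<^sub>v (M *\<^sub>v g)"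
      unfolding bg Nx2[OF g] using X(1) g Mg by (intro mult_minus_distrib_mat_vec) auto
    also have "X *\<^sub>v (M *\<^sub>v g) = g" by (rule cancel[OF X(1) M X(3) g])
    also have "X *\<^sub>v ((s - lam) \<cdot>\<^sub>v g) = (s - lam) \<cdot>\<^sub>v (X *\<^sub>v g)" by (rule mult_mat_vec[OF X(1) g])
    finally show ?thesis .
  qed
  have E3: "Wh *\<^sub>v b = (s - lam) \<cdot>\<^sub>v (Wh *\<^sub>v g) - Ks *\<^sub>v y"
  proof -
    have "Wh *\<^sub>v b = Wh *\<^sub>v ((s - lam) \<cdot>\<^sub>v g) - Wh *\<^sub>v (M *\<^sub>v g)"
      unfolding bg Nx2[OF g] using Wh g Mg by (intro mult_minus_distrib_mat_vec) auto
    also have "Wh *\<^sub>v (M *\<^sub>v g) = Ks *\<^sub>v y" using WhMV[OF y(1)] y(2) by simp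
    also have "Wh *\<^sub>v ((s - lam) \<cdot>\<^sub>v g) = (s - lam) \<cdot>\<^sub>v (Wh *\<^sub>v g)" by (rule mult_mat_vec[OF Wh g])
    finally show ?thesis .
  qed
  have Ksy: "Ks *\<^sub>v y \<in> carrier_vec p" using Ks y by simp
  have E4: "Ki *\<^sub>v (Wh *\<^sub>v b) = (s - lam) \<cdot>\<^sub>v r - y"
  proof -
    have "Ki *\<^sub>v (Wh *\<^sub>v b) = Ki *\<^sub>v ((s - lam) \<cdot>\<^sub>v (Wh *\<^sub>v g)) - Ki *\<^sub>v (Ks *\<^sub>v y)"
      unfolding E3 using Ki(1) Whg Ksy by (intro mult_minus_distrib_mat_vec) auto
    also have "Ki *\<^sub>v (Ks *\<^sub>v y) = y" by (rule cancel[OF Ki(1) Ks Ki(3) y(1)])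
    also have "Ki *\<^sub>v ((s - lam) \<cdot>\<^sub>v (Wh *\<^sub>v g)) = (s - lam) \<cdot>\<^sub>v r"
      unfolding r_def by (rule mult_mat_vec[OF Ki(1) Whg])
    finally show ?thesis .
  qed
  have E5: "V *\<^sub>v (Ki *\<^sub>v (Wh *\<^sub>v b)) = (s - lam) \<cdot>\<^sub>v (V *\<^sub>v r) - g"
  proof -
    have "V *\<^sub>v (Ki *\<^sub>v (Wh *\<^sub>v b)) = V *\<^sub>v ((s - lam) \<cdot>\<^sub>v r) - V *\<^sub>v y"
      unfolding E4 using V r y by (intro mult_minus_distrib_mat_vec) auto
    then show ?thesis using mult_mat_vec[OF V r] y(2) by simp
  qed
  have E6: "X *\<^sub>v b - V *\<^sub>v (Ki *\<^sub>v (Wh *\<^sub>v b)) = (s - lam) \<cdot>\<^sub>v z"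
    unfolding E2 E5 z_def by (rule vec_alg1[OF Xg Vr g])
  define u where "u = C *\<^sub>v z"
  have u: "u \<in> carrier_vec n" unfolding u_def using C z by simp
  have Rfv2: "Rfun n Pc d A B C s *\<^sub>v v = (s - lam) \<cdot>\<^sub>v u"
    unfolding Rfv E6 u_def by (rule mult_mat_vec[OF C z])
  \<comment> \<open>interpolation on the left\<close>
  define Ch where "Ch = mat_adjoint C"
  have Ch: "Ch \<in> carrier_mat k n" unfolding Ch_def using C by simp
  define cv where "cv = Ch *\<^sub>v u"
  have cv: "cv \<in> carrier_vec k" unfolding cv_def using Ch u by simp
  define w where "w = Nhi *\<^sub>v cv"
  have w: "w \<in> carrier_vec k" unfolding w_def using Nhi(1) cv by simp
  have "w \<in> colspace (Nhi * Ch)"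
  proof -
    have "(Nhi * Ch) *\<^sub>v u = w" unfolding w_def cv_def using Nhi(1) Ch u by (intro assoc_mult_mat_vec) auto
    moreover have "u \<in> carrier_vec (dim_col (Nhi * Ch))" using u Ch by simp
    ultimately show ?thesis using colspace_mem by metis
  qed
  also have "colspace (Nhi * Ch) \<subseteq> colspace (Wtil A C q lam)"
    unfolding Nhi_def Nh_def N_def Ch_def
    by (rule Wtil_first[OF A q]) (use Nhi(1) in \<open>simp add: Nhi_def Nh_def N_def\<close>)
  also note colW
  finally obtain t where t: "t \<in> carrier_vec p" "W *\<^sub>v t = w" unfolding colspace_def using W by auto
  have cw: "cv = Nh *\<^sub>v w" unfolding w_def using cancel[OF Nh Nhi(1) Nhi(2) cv] by simp
  have nw: "nrm w \<le> nrm cv / (xi / 2)"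
  proof -
    define Niw where "Niw = Ni *\<^sub>v w"
    have Niw: "Niw \<in> carrier_vec k" unfolding Niw_def using Ni(1) w by simp
    have "ip w w = ip (N *\<^sub>v Niw) w" unfolding Niw_def using cancel[OF N Ni(1) Ni(2) w] by simp
    also have "\<dots> = ip Niw (Nh *\<^sub>v w)" unfolding Nh_def by (rule ip_adj[OF N Niw w])
    finally have "ip w w = ip Niw cv" using cw by simp
    then have "(nrm w)^2 = cmod (ip Niw cv)" by (rule ip_self_cmod)
    also have "\<dots> \<le> nrm Niw * nrm cv" using ip_cs[of Niw cv] Niw cv by simp
    also have "\<dots> \<le> (nrm w / (xi / 2)) * nrm cv" unfolding Niw_def using Ni(4)[OF w]
      by (intro mult_right_mono) auto
    finally have "nrm w * nrm w \<le> nrm w * (nrm cv / (xi / 2))" by (simp add: power2_eq_square algebra_simps)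
    from cancel_sq[OF nrm_ge0 _ this] show ?thesis using xi by simp
  qed
  have nt: "nrm t = nrm w" using orth_nrm[OF W oW t(1)] t(2) by simp
  have ncv: "nrm cv \<le> fro Ch * nrm u" unfolding cv_def by (rule nrm_mult[OF Ch u])
  have Whz: "Wh *\<^sub>v z \<in> carrier_vec p" using Wh z by simp
  have Mz: "M *\<^sub>v z \<in> carrier_vec k" using M z by simp
  have WhMz: "Wh *\<^sub>v (M *\<^sub>v z) = 0\<^sub>v p"
  proof -
    have "M *\<^sub>v z = M *\<^sub>v (X *\<^sub>v g) - M *\<^sub>v (V *\<^sub>v r)"
      unfolding z_def using M Xg Vr by (intro mult_minus_distrib_mat_vec) auto
    also have "M *\<^sub>v (X *\<^sub>v g) = g" by (rule cancel[OF M X(1) X(2) g])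
    finally have "Wh *\<^sub>v (M *\<^sub>v z) = Wh *\<^sub>v g - Wh *\<^sub>v (M *\<^sub>v (V *\<^sub>v r))"
      using Wh g M Vr by (simp add: mult_minus_distrib_mat_vec)
    also have "Wh *\<^sub>v (M *\<^sub>v (V *\<^sub>v r)) = Ks *\<^sub>v r" by (rule WhMV[OF r])
    also have "Ks *\<^sub>v r = Wh *\<^sub>v g" unfolding r_def by (rule cancel[OF Ks Ki(1) Ki(2) Whg])
    finally show ?thesis using Whg by simp
  qed
  have E7: "Wh *\<^sub>v (N *\<^sub>v z) = (s - lam) \<cdot>\<^sub>v (Wh *\<^sub>v z)"
  proof -
    have "Wh *\<^sub>v (N *\<^sub>v z) = Wh *\<^sub>v ((s - lam) \<cdot>\<^sub>v z) - Wh *\<^sub>v (M *\<^sub>v z)"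
      unfolding Nx2[OF z] using Wh z Mz by (intro mult_minus_distrib_mat_vec) auto
    also have "\<dots> = (s - lam) \<cdot>\<^sub>v (Wh *\<^sub>v z) - 0\<^sub>v p" unfolding WhMz using mult_mat_vec[OF Wh z] by simp
    also have "\<dots> = (s - lam) \<cdot>\<^sub>v (Wh *\<^sub>v z)" using Whz by (intro eq_vecI) auto
    finally show ?thesis .
  qed
  have Nz: "N *\<^sub>v z \<in> carrier_vec k" using N z by simp
  have "ip u u = ip z cv" unfolding u_def cv_def Ch_def using ip_adj[OF C z, of u] u u_def by simp
  also have "\<dots> = ip (N *\<^sub>v z) w" unfolding cw Nh_def by (rule ip_adj[OF N z w, symmetric])
  also have "\<dots> = cnj (ip (W *\<^sub>v t) (N *\<^sub>v z))" using ip_cnj[of "W *\<^sub>v t" "N *\<^sub>v z"] t w Nz N by simp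
  also have "ip (W *\<^sub>v t) (N *\<^sub>v z) = ip t (Wh *\<^sub>v (N *\<^sub>v z))" unfolding Wh_def by (rule ip_adj[OF W t(1) Nz])
  also have "cnj (ip t (Wh *\<^sub>v (N *\<^sub>v z))) = ip (Wh *\<^sub>v (N *\<^sub>v z)) t"
    using ip_cnj[of "Wh *\<^sub>v (N *\<^sub>v z)" t] Wh Nz t by simp
  also have "\<dots> = (s - lam) * ip (Wh *\<^sub>v z) t" unfolding E7 by (rule ip_smult_left)
  finally have "(nrm u)^2 = cmod ((s - lam) * ip (Wh *\<^sub>v z) t)" by (rule ip_self_cmod)
  also have "\<dots> = cmod (s - lam) * cmod (ip (Wh *\<^sub>v z) t)" by (rule norm_mult)
  also have "\<dots> \<le> cmod (s - lam) * (nrm (Wh *\<^sub>v z) * nrm t)"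
    using ip_cs[of "Wh *\<^sub>v z" t] Whz t Wh by (intro mult_left_mono) auto
  also have "\<dots> \<le> cmod (s - lam) * (nrm z * (fro Ch * nrm u / (xi / 2)))"
  proof -
    have "nrm (Wh *\<^sub>v z) \<le> nrm z" unfolding Wh_def by (rule orth_adj_nrm[OF W oW z])
    moreover have "nrm t \<le> fro Ch * nrm u / (xi / 2)"
    proof -
      have "nrm cv / (xi / 2) \<le> fro Ch * nrm u / (xi / 2)" by (rule divide_right_mono[OF ncv]) (use xi in simp)
      then show ?thesis using nt nw by linarith
    qed
    ultimately show ?thesis by (intro mult_left_mono mult_mono) auto
  qed
  finally have nu2: "nrm u * nrm u \<le> nrm u * (cmod (s - lam) * nrm z * fro Ch / (xi / 2))"
    by (simp add: power2_eq_square algebra_simps)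
  have nu: "nrm u \<le> cmod (s - lam) * nrm z * fro Ch / (xi / 2)"
    using cancel_sq[OF nrm_ge0 _ nu2] xi by simp
  have a0: "0 < xi / 2" using xi by simp
  have nb: "nrm b \<le> fro B" using nrm_mult[OF B v] nv unfolding b_def by simp
  have ng: "nrm g \<le> fro B / (xi / 2)"
  proof -
    have "nrm g \<le> nrm b / (xi / 2)" unfolding g_def by (rule Ni(4)[OF b])
    also have "\<dots> \<le> fro B / (xi / 2)" by (rule divide_right_mono[OF nb]) (use a0 in simp)
    finally show ?thesis .
  qed
  have nr: "nrm r \<le> nrm g / (xi / 2)"
  proof -
    have "nrm r \<le> nrm (Wh *\<^sub>v g) / (xi / 2)" unfolding r_def by (rule Ki(4)[OF Whg])
    also have "\<dots> \<le> nrm g / (xi / 2)"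
      by (rule divide_right_mono) (use orth_adj_nrm[OF W oW g] a0 in \<open>simp_all add: Wh_def\<close>)
    finally show ?thesis .
  qed
  have nz: "nrm z \<le> 2 * (fro B / (xi / 2)) / (xi / 2)"
  proof -
    have "nrm z \<le> nrm (X *\<^sub>v g) + nrm (V *\<^sub>v r)" unfolding z_def by (rule nrm_diff[OF Xg Vr])
    also have "nrm (V *\<^sub>v r) = nrm r" by (rule orth_nrm[OF V oV r])
    also have "nrm (X *\<^sub>v g) \<le> nrm g / (xi / 2)" by (rule X(4)[OF g])
    finally have "nrm z \<le> 2 * nrm g / (xi / 2)" using nr by simp
    also have "\<dots> \<le> 2 * (fro B / (xi / 2)) / (xi / 2)"
      by (rule divide_right_mono) (use ng a0 in simp_all)
    finally show ?thesis .
  qed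
  have "nrm (Rfun n Pc d A B C s *\<^sub>v v) = cmod (s - lam) * nrm u" unfolding Rfv2 by (rule nrm_smult)
  also have "\<dots> \<le> cmod (s - lam) * (cmod (s - lam) * nrm z * fro Ch / (xi / 2))"
    by (rule mult_left_mono[OF nu]) simp
  also have "\<dots> \<le> cmod (s - lam) * (cmod (s - lam) * (2 * (fro B / (xi / 2)) / (xi / 2)) * fro Ch / (xi / 2))"
    using nz a0 by (intro mult_left_mono divide_right_mono mult_right_mono) auto
  also have "\<dots> = (16 * fro Ch * fro B / xi^3) * (cmod (s - lam))^2"
    using xi by (simp add: field_simps power2_eq_square power3_eq_cube)
  finally show ?thesis using v nv unfolding Ch_def by blast
qed

theorem theorem2p7:
  fixes n k d q :: nat and Pc :: "nat \<Rightarrow> complex mat" and A B C :: "complex mat"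
    and \<tau> lstar :: complex and \<xi> :: real
  assumes "n \<ge> 1" and "q \<ge> 2"
    and "\<forall>j\<le>d. Pc j \<in> carrier_mat n n"
    and "A \<in> carrier_mat k k" and "B \<in> carrier_mat k n" and "C \<in> carrier_mat n k"
    and "\<xi> > 0"
    and "eta n (Rfun n Pc d A B C lstar) = 0"
    and "\<forall>j\<in>{1..<n}. eta j (Rfun n Pc d A B C lstar) > 0"
    and "sigma_min (A - lstar \<cdot>\<^sub>m 1\<^sub>m k) \<ge> \<xi>"
    and "\<exists>H. hessian_at (\<lambda>s. eta n (Rfun n Pc d A B C s)) lstar H \<and> bij H"
  shows "\<exists>Cst>0. \<exists>\<delta>>0. \<forall>lam V W l.
           subspace_iterates n Pc d A B C q \<tau> lam V W l \<and>
           cmod (lam l - lstar) < \<delta> \<and> cmod (lam (Suc l) - lstar) < \<delta> \<and>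
           sigma_min (mat_adjoint (W l) * A * V l - lstar \<cdot>\<^sub>m (mat_adjoint (W l) * V l)) \<ge> \<xi>
           \<longrightarrow> cmod (lam (Suc l) - lstar) \<le> Cst * (cmod (lam l - lstar))\<^sup>2"
proof -
  note n1 = assms(1) and q2 = assms(2) and A = assms(4) and B = assms(5) and C = assms(6)
    and xi = assms(7) and eta0 = assms(8) and sig = assms(10) and hess = assms(11)
  have npos: "0 < n" using n1 by simp
  define f where "f s = eta n (Rfun n Pc d A B C s)" for s
  have Rc: "Rfun n Pc d A B C s \<in> carrier_mat n n" for s by (rule Rfun_carrier[OF C B])
  have fpos: "0 \<le> f w" for w unfolding f_def by (rule eta_nonneg[OF Rc npos])
  obtain H g where gd: "\<forall>\<^sub>F w in nhds lstar. (f has_derivative (\<lambda>h. g w \<bullet> h)) (at w)"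
    and gH: "(g has_derivative H) (at lstar)" and bH: "bij H"
    using hess unfolding hessian_at_def f_def[symmetric] by blast
  have f0: "f lstar = 0" unfolding f_def by (rule eta0)
  obtain c r where c: "0 < c" and r: "0 < r"
    and cr: "\<And>w. cmod (w - lstar) < r \<Longrightarrow> c * (cmod (w - lstar))^2 \<le> f w"
    using hess_lower[OF f0 fpos gd gH bH] by blast
  have T: "A - lstar \<cdot>\<^sub>m 1\<^sub>m k \<in> carrier_mat k k" by (intro minus_carrier_mat) auto
  have lowT: "\<xi> * nrm x \<le> nrm ((A - lstar \<cdot>\<^sub>m 1\<^sub>m k) *\<^sub>v x)" if "x \<in> carrier_vec k" for x
    by (rule sigma_lower[OF T xi sig that])
  define Kb where "Kb = 16 * fro (mat_adjoint C) * fro B / \<xi>^3"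
  have Kb: "0 \<le> Kb" unfolding Kb_def using xi by simp
  define sc where "sc = sqrt c"
  have sc: "0 < sc" unfolding sc_def using c by simp
  define \<delta> where "\<delta> = min (\<xi> / 2) (min r (sc / (4 * Kb + 1)))"
  have d0: "0 < \<delta>" unfolding \<delta>_def using xi r sc Kb by simp
  define Cst where "Cst = 4 * Kb / sc + 1"
  have C0: "0 < Cst" unfolding Cst_def using Kb sc by (simp add: add_nonneg_pos)
  have main: "cmod (lam (Suc l) - lstar) \<le> Cst * (cmod (lam l - lstar))\<^sup>2"
    if it: "subspace_iterates n Pc d A B C q \<tau> lam V W l"
      and el: "cmod (lam l - lstar) < \<delta>" and es: "cmod (lam (Suc l) - lstar) < \<delta>"
      and sig2: "sigma_min (mat_adjoint (W l) * A * V l - lstar \<cdot>\<^sub>m (mat_adjoint (W l) * V l)) \<ge> \<xi>"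
    for lam V W l
  proof -
    have st: "subspace_step n Pc d A B C q \<tau> lam V W l" using it unfolding subspace_iterates_def by simp
    have stp: "subspace_step n Pc d A B C q \<tau> lam V W (l - 1)" using it unfolding subspace_iterates_def by simp
    note S = st[unfolded subspace_step_def]
    have dA: "dim_row A = k" using A by simp
    have rV: "dim_row (V l) = k" and rW: "dim_row (W l) = k" and oV: "orthonormal_cols (V l)"
      and oW: "orthonormal_cols (W l)" and re: "red_eigenvalue n Pc d A B C (V l) (W l) (lam (Suc l))"
      using S dA by auto
    have dVt: "dim_row (Vtil A B q lam') = k" for lam' unfolding Vtil_def hcat_list_dim dA ..
    have dWt: "dim_row (Wtil A C q lam') = k" for lam' unfolding Wtil_def hcat_list_dim dA ..
    have colV: "colspace (Vtil A B q (lam l)) \<subseteq> colspace (V l)"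
    proof (cases "l = 0")
      case True then show ?thesis using S by simp
    next
      case False
      have "dim_row (V (l - 1)) = k" using stp[unfolded subspace_step_def] dA by auto
      then have "colspace (Vtil A B q (lam l)) \<subseteq> colspace (hcat (V (l - 1)) (Vtil A B q (lam l)))"
        using dVt by (intro colspace_hcat_R) simp
      also have "\<dots> = colspace (V l)" using S False by simp
      finally show ?thesis .
    qed
    have colW: "colspace (Wtil A C q (lam l)) \<subseteq> colspace (W l)"
    proof (cases "l = 0")
      case True then show ?thesis using S by simp
    next
      case False
      have "dim_row (W (l - 1)) = k" using stp[unfolded subspace_step_def] dA by auto
      then have "colspace (Wtil A C q (lam l)) \<subseteq> colspace (hcat (W (l - 1)) (Wtil A C q (lam l)))"
        using dWt by (intro colspace_hcat_R) simp
      also have "\<dots> = colspace (W l)" using S False by simp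
      finally show ?thesis .
    qed
    have inv: "invertible_mat (lam (Suc l) \<cdot>\<^sub>m (mat_adjoint (W l) * V l) - mat_adjoint (W l) * A * V l)"
      and det: "det (Rred n Pc d A B C (V l) (W l) (lam (Suc l))) = 0"
      using re unfolding red_eigenvalue_def by auto
    have sq: "dim_col (W l) = dim_col (V l)" using inv unfolding invertible_mat_def by simp
    define p where "p = dim_col (V l)"
    have V: "V l \<in> carrier_mat k p" using rV unfolding p_def by auto
    have W: "W l \<in> carrier_mat k p" using rW sq unfolding p_def by auto
    have T2: "mat_adjoint (W l) * A * V l - lstar \<cdot>\<^sub>m (mat_adjoint (W l) * V l) \<in> carrier_mat p p"
      using V W A by (intro minus_carrier_mat) (auto intro: mult_carrier_mat)
    have lowT2: "\<xi> * nrm x \<le> nrm ((mat_adjoint (W l) * A * V l - lstar \<cdot>\<^sub>m (mat_adjoint (W l) * V l)) *\<^sub>v x)"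
      if "x \<in> carrier_vec p" for x
      by (rule sigma_lower[OF T2 xi sig2 that])
    have dd: "\<delta> \<le> \<xi> / 2" "\<delta> \<le> r" "\<delta> \<le> sc / (4 * Kb + 1)" unfolding \<delta>_def
      by (rule min.cobounded1, rule order.trans[OF min.cobounded2 min.cobounded1],
          rule order.trans[OF min.cobounded2 min.cobounded2])
    have ds: "cmod (lam (Suc l) - lstar) \<le> \<xi> / 2" using es dd by linarith
    have dl: "cmod (lam l - lstar) \<le> \<xi> / 2" using el dd by linarith
    have q1: "1 \<le> q" using q2 by simp
    obtain v where v: "v \<in> carrier_vec n" "nrm v = 1"
      and nR: "nrm (Rfun n Pc d A B C (lam (Suc l)) *\<^sub>v v) \<le> Kb * (cmod (lam (Suc l) - lam l))^2"
      using main_est[OF A B C xi lowT V W oV oW lowT2 q1 colV colW ds dl det] unfolding Kb_def by blast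
    define e where "e = cmod (lam l - lstar)"
    define e' where "e' = cmod (lam (Suc l) - lstar)"
    define dl' where "dl' = cmod (lam (Suc l) - lam l)"
    have fle: "f (lam (Suc l)) \<le> (Kb * dl'^2)^2"
    proof -
      have "f (lam (Suc l)) \<le> (nrm (Rfun n Pc d A B C (lam (Suc l)) *\<^sub>v v))^2"
        unfolding f_def by (rule eta_le[OF Rc npos v])
      also have "\<dots> \<le> (Kb * dl'^2)^2" unfolding dl'_def using nR by (intro power_mono) auto
      finally show ?thesis .
    qed
    have cle: "c * e'^2 \<le> f (lam (Suc l))" unfolding e'_def using cr es dd by simp
    have "sc * e' \<le> Kb * dl'^2"
    proof -
      have "c * e'^2 \<le> (Kb * dl'^2)^2" using cle fle by linarith
      then have "sqrt (c * e'^2) \<le> sqrt ((Kb * dl'^2)^2)" by (rule real_sqrt_le_mono)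
      moreover have "sqrt (c * e'^2) = sc * e'" unfolding sc_def e'_def by (simp add: real_sqrt_mult)
      moreover have "sqrt ((Kb * dl'^2)^2) = Kb * dl'^2" using Kb by simp
      ultimately show ?thesis by simp
    qed
    moreover have "dl' \<le> e' + e"
    proof -
      have "lam (Suc l) - lam l = (lam (Suc l) - lstar) - (lam l - lstar)" by simp
      then show ?thesis unfolding dl'_def e'_def e_def by (metis norm_triangle_ineq4)
    qed
    then have "dl'^2 \<le> (e' + e)^2" unfolding dl'_def by (intro power_mono) auto
    moreover have "(e' + e)^2 \<le> 2 * e'^2 + 2 * e^2"
    proof -
      have "2 * e'^2 + 2 * e^2 - (e' + e)^2 = (e' - e)^2" by (simp add: power2_eq_square algebra_simps)
      then show ?thesis using zero_le_power2[of "e' - e"] by linarith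
    qed
    ultimately have "dl'^2 \<le> 2 * e'^2 + 2 * e^2" by linarith
    then have "Kb * dl'^2 \<le> Kb * (2 * e'^2 + 2 * e^2)" using Kb by (intro mult_left_mono) auto
    with \<open>sc * e' \<le> Kb * dl'^2\<close> have A1: "sc * e' \<le> 2 * Kb * e'^2 + 2 * Kb * e^2"
      by (simp add: algebra_simps)
    have e'0: "0 \<le> e'" unfolding e'_def by simp
    have e'd: "e' \<le> sc / (4 * Kb + 1)" using es dd unfolding e'_def by linarith
    have "2 * Kb * e' \<le> 2 * Kb * (sc / (4 * Kb + 1))" using e'd Kb by (intro mult_left_mono) auto
    also have "\<dots> \<le> sc / 2" using Kb sc by (simp add: field_simps)
    finally have "e' * (2 * Kb * e') \<le> e' * (sc / 2)" using e'0 by (intro mult_left_mono) auto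
    then have "2 * Kb * e'^2 \<le> sc / 2 * e'" by (simp add: power2_eq_square algebra_simps)
    with A1 have "sc / 2 * e' \<le> 2 * Kb * e^2" by linarith
    then have "e' \<le> 4 * Kb * e^2 / sc" using sc by (simp add: field_simps)
    also have "\<dots> \<le> Cst * e^2" unfolding Cst_def using sc by (simp add: field_simps)
    finally show ?thesis unfolding e'_def e_def .
  qed
  show ?thesis using C0 d0 main by blast
qed

end
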